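(* Assume the hypotheses of the main addition theorem (see context), and write $S_r=S_r(\wp(z_1),\ldots,\wp(z_\ell))$. Then for all $r_1,r_2\in\{1,\ldots,\ell+1\}$, \[ (-1)^{r_1}S_{r_2-1}\,\mu(\ell+1-r_1)-(-1)^{r_2}S_{r_1-1}\,\mu(\ell+1-r_2)=\big(S_{r_1}S_{r_2-1}-S_{r_2}S_{r_1-1}\big)\mu(\ell+1). \]
   Context: Let $\omega_1,\omega_2\in\mathbb{C}$ with $\mathrm{Im}(\omega_2/\omega_1)>0$, $\Lambda=2\omega_1\mathbb{Z}+2\omega_2\mathbb{Z}$, $\wp$ the Weierstrass elliptic function of $\Lambda$ with invariants $g_2,g_3$, so $(\wp')^2=4\wp^3-g_2\wp-g_3$. For $j\ge0$, $\wp^{(j)}$ is the $j$-th derivative ($\wp^{(0)}=\wp$), and $\wp^{(-2)}\equiv1$; the index $-2$ counts as even. $\mathbb{N}=\{0,1,2,\ldots\}$. Standing setup: $m,\ell\ge1$; $n_1,\ldots,n_m$ pairwise distinct in $\mathbb{N}\cup\{-2\}$, $k_1,\ldots,k_\ell$ pairwise distinct in $\mathbb{N}\cup\{-2\}$, with $\ell=\max(\max_i n_i,\max_i k_i)+1$; $\gamma_1,\ldots,\gamma_m\in\mathbb{C}$; $z_1,\ldots,z_\ell\in\mathbb{C}\setminus\Lambda$ with $\det(\wp^{(k_j)}(z_i))_{i,j=1}^\ell\ne0$; $\lambda_1,\ldots,\lambda_\ell$ the unique solution of $\sum_{i=1}^m\gamma_i\wp^{(n_i)}(z_j)=\sum_{i=1}^\ell\lambda_i\wp^{(k_i)}(z_j)$,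 $j=1,\ldots,\ell$; $z=z_1+\cdots+z_\ell\notin\Lambda$; and $\psi(s)=\sum_i\gamma_i\wp^{(n_i)}(s)-\sum_i\lambda_i\wp^{(k_i)}(s)$ has a pole of order exactly $\ell+1$ at $0$. Define $\varphi(s)=\big(\sum_{n_i\text{ odd}}\gamma_i\wp^{(n_i)}(s)-\sum_{k_i\text{ odd}}\lambda_i\wp^{(k_i)}(s)\big)^2-\big(\sum_{n_i\text{ even}}\gamma_i\wp^{(n_i)}(s)-\sum_{k_i\text{ even}}\lambda_i\wp^{(k_i)}(s)\big)^2$, a polynomial in $\wp(s)$ of degree at most $\ell+1$ with coefficients $\mu(r)$: $\varphi(s)=\sum_{r=0}^{\ell+1}\mu(r)\wp(s)^r$. Hypotheses of the main addition theorem: $\varphi\not\equiv0$, $z\not\equiv\pm z_i\pmod\Lambda$ for all $i$, $z_i\not\equiv-z_j\pmod\Lambda$ for $i\ne j$. $S_r(x_1,\ldots,x_N)$ is the $r$-th elementary symmetric polynomial ($S_0=1$, $S_r=0$ for $r>N$). *)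

theory Defs
  imports "HOL-Complex_Analysis.Complex_Analysis" "Jordan_Normal_Form.Determinant"
begin

definition lattice :: "complex \<Rightarrow> complex \<Rightarrow> complex set" where
  "lattice w1 w2 = {of_int a * (2 * w1) + of_int b * (2 * w2) | a b. True}"

text \<open>Weierstrass wp function (meaningful off the lattice; the series converges absolutely).\<close>
definition wp :: "complex \<Rightarrow> complex \<Rightarrow> complex \<Rightarrow> complex" where
  "wp w1 w2 s = 1 / s\<^sup>2 + infsum (\<lambda>w. 1 / (s - w)\<^sup>2 - 1 / w\<^sup>2) (lattice w1 w2 - {0})"

definition wpd :: "complex \<Rightarrow> complex \<Rightarrow> int \<Rightarrow> complex \<Rightarrow> complex" where
  "wpd w1 w2 j s = (if j = -2 then 1 else (deriv ^^ nat j) (wp w1 w2) s)"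

definition esym :: "nat \<Rightarrow> (nat \<Rightarrow> complex) \<Rightarrow> nat \<Rightarrow> complex" where
  "esym N x r = (\<Sum>I | I \<subseteq> {1..N} \<and> card I = r. \<Prod>i\<in>I. x i)"

definition psi :: "complex \<Rightarrow> complex \<Rightarrow> nat \<Rightarrow> (nat \<Rightarrow> int) \<Rightarrow> (nat \<Rightarrow> complex)
    \<Rightarrow> nat \<Rightarrow> (nat \<Rightarrow> int) \<Rightarrow> (nat \<Rightarrow> complex) \<Rightarrow> complex \<Rightarrow> complex" where
  "psi w1 w2 m n gam l k lam s =
     (\<Sum>i=1..m. gam i * wpd w1 w2 (n i) s) - (\<Sum>i=1..l. lam i * wpd w1 w2 (k i) s)"

definition phi :: "complex \<Rightarrow> complex \<Rightarrow> nat \<Rightarrow> (nat \<Rightarrow> int) \<Rightarrow> (nat \<Rightarrow> complex)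
    \<Rightarrow> nat \<Rightarrow> (nat \<Rightarrow> int) \<Rightarrow> (nat \<Rightarrow> complex) \<Rightarrow> complex \<Rightarrow> complex" where
  "phi w1 w2 m n gam l k lam s =
     ((\<Sum>i\<in>{i\<in>{1..m}. odd (n i)}. gam i * wpd w1 w2 (n i) s)
       - (\<Sum>i\<in>{i\<in>{1..l}. odd (k i)}. lam i * wpd w1 w2 (k i) s))\<^sup>2
   - ((\<Sum>i\<in>{i\<in>{1..m}. even (n i)}. gam i * wpd w1 w2 (n i) s)
       - (\<Sum>i\<in>{i\<in>{1..l}. even (k i)}. lam i * wpd w1 w2 (k i) s))\<^sup>2"

end

theory Submission
  imports Defs
begin


locale ell = fixes w1 w2 :: complex assumes tau: "Im (w2/w1) > 0"
begin

definition W :: "int \<Rightarrow> int \<Rightarrow> complex" where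
  "W m n = of_int m * (2*w1) + of_int n * (2*w2)"

definition D :: real where "D = Im (cnj w1 * w2)"

definition m0 :: real where "m0 = 2 * D / (cmod w1 + cmod w2)"

lemma L_eq: "lattice w1 w2 = range (\<lambda>(m,n). W m n)"
  unfolding lattice_def W_def by auto

lemma W_in: "W m n \<in> lattice w1 w2"
  unfolding L_eq by auto

lemma L_cases: assumes "w \<in> lattice w1 w2" obtains m n where "w = W m n"
  using assms unfolding L_eq by auto

lemma w1_nz: "w1 \<noteq> 0" using tau by auto

lemma D_pos: "D > 0"
proof -
  have "w2 / w1 = w2 * cnj w1 / complex_of_real ((cmod w1)\<^sup>2)"
    by (rule complex_div_cnj)
  then have "Im (w2/w1) = Im (w2 * cnj w1) / (cmod w1)\<^sup>2"
    by (simp add: Im_divide_of_real)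
  moreover have "(cmod w1)\<^sup>2 > 0" using w1_nz by simp
  ultimately have "Im (w2 * cnj w1) / (cmod w1)\<^sup>2 > 0" using tau by simp
  with \<open>(cmod w1)\<^sup>2 > 0\<close> have "Im (w2 * cnj w1) > 0" by (simp add: zero_less_divide_iff)
  then show ?thesis unfolding D_def by (simp add: mult.commute)
qed

lemma coord_bound:
  fixes x y :: real
  shows "\<bar>y\<bar> * D \<le> cmod w1 * cmod (of_real x * w1 + of_real y * w2)"
    and "\<bar>x\<bar> * D \<le> cmod w2 * cmod (of_real x * w1 + of_real y * w2)"
proof -
  have "Im (cnj w1 * (of_real x * w1 + of_real y * w2)) = y * D"
    unfolding D_def by (simp add: algebra_simps)
  moreover have "\<bar>Im (cnj w1 * (of_real x * w1 + of_real y * w2))\<bar> \<le> cmod w1 * cmod (of_real x * w1 + of_real y * w2)"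
    by (metis abs_Im_le_cmod complex_mod_cnj norm_mult)
  ultimately show "\<bar>y\<bar> * D \<le> cmod w1 * cmod (of_real x * w1 + of_real y * w2)"
    using D_pos by (simp add: abs_mult)
  have "Im (cnj w2 * (of_real x * w1 + of_real y * w2)) = - x * D"
    unfolding D_def by (simp add: algebra_simps)
  moreover have "\<bar>Im (cnj w2 * (of_real x * w1 + of_real y * w2))\<bar> \<le> cmod w2 * cmod (of_real x * w1 + of_real y * w2)"
    by (metis abs_Im_le_cmod complex_mod_cnj norm_mult)
  ultimately show "\<bar>x\<bar> * D \<le> cmod w2 * cmod (of_real x * w1 + of_real y * w2)"
    using D_pos by (simp add: abs_mult)
qed

lemma indep: fixes x y :: real
  assumes "of_real x * w1 + of_real y * w2 = 0" shows "x = 0" "y = 0"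
  using coord_bound[of y x] coord_bound[of x y] assms D_pos
  by (auto simp: zero_less_mult_iff mult_le_0_iff)

lemma W_real: "W m n = of_real (2 * of_int m) * w1 + of_real (2 * of_int n) * w2"
  unfolding W_def by simp

lemma m0_pos: "m0 > 0"
  using D_pos w1_nz unfolding m0_def by (simp add: add_pos_nonneg)

lemma W_bound: "(\<bar>of_int m\<bar> + \<bar>of_int n\<bar>) * m0 \<le> cmod (W m n)"
proof -
  have a: "\<bar>2 * of_int n\<bar> * D \<le> cmod w1 * cmod (W m n)"
    and b: "\<bar>2 * of_int m\<bar> * D \<le> cmod w2 * cmod (W m n)"
    using coord_bound(1)[where x="2 * of_int m" and y="2 * of_int n"] coord_bound(2)[where x="2 * of_int m" and y= "2 * of_int n"]
    unfolding W_real[symmetric] by auto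
  have "(\<bar>of_int m\<bar> + \<bar>of_int n\<bar>) * (2 * D) \<le> (cmod w1 + cmod w2) * cmod (W m n)"
    using a b by (simp add: algebra_simps abs_mult)
  moreover have "cmod w1 + cmod w2 > 0" using w1_nz by (simp add: add_pos_nonneg)
  ultimately show ?thesis unfolding m0_def
    by (simp add: field_simps)
qed

lemma W_zero_iff: "W m n = 0 \<longleftrightarrow> m = 0 \<and> n = 0"
  using indep[of "2 * of_int m" "2 * of_int n"] unfolding W_real by auto

lemma W_add: "W m n + W m' n' = W (m+m') (n+n')" unfolding W_def by (simp add: algebra_simps)
lemma W_minus: "- W m n = W (-m) (-n)" unfolding W_def by (simp add: algebra_simps)
lemma W_diff: "W m n - W m' n' = W (m-m') (n-n')" unfolding W_def by (simp add: algebra_simps)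

lemma W_inj: "W m n = W m' n' \<longleftrightarrow> m = m' \<and> n = n'"
  using W_zero_iff[of "m-m'" "n-n'"] W_diff[of m n m' n'] by auto

lemma L_add: "a \<in> lattice w1 w2 \<Longrightarrow> b \<in> lattice w1 w2 \<Longrightarrow> a + b \<in> lattice w1 w2"
  by (metis L_cases W_add W_in)
lemma L_minus: "a \<in> lattice w1 w2 \<Longrightarrow> - a \<in> lattice w1 w2"
  by (metis L_cases W_minus W_in)
lemma L_diff: "a \<in> lattice w1 w2 \<Longrightarrow> b \<in> lattice w1 w2 \<Longrightarrow> a - b \<in> lattice w1 w2"
  by (metis L_cases W_diff W_in)
lemma L_zero: "0 \<in> lattice w1 w2" by (metis W_in W_zero_iff)

lemma L_norm: assumes "w \<in> lattice w1 w2" "w \<noteq> 0" shows "m0 \<le> cmod w"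
proof -
  obtain m n where w: "w = W m n" using assms L_cases by blast
  then have "m \<noteq> 0 \<or> n \<noteq> 0" using assms W_zero_iff by auto
  then have "1 \<le> \<bar>real_of_int m\<bar> + \<bar>of_int n\<bar>" by linarith
  then have "m0 \<le> (\<bar>of_int m\<bar> + \<bar>of_int n\<bar>) * m0" using m0_pos by simp
  then show ?thesis using W_bound w by (meson order.trans)
qed

lemma L_sep: "a \<in> lattice w1 w2 \<Longrightarrow> b \<in> lattice w1 w2 \<Longrightarrow> a \<noteq> b \<Longrightarrow> m0 \<le> dist a b"
  using L_norm[of "a-b"] L_diff by (auto simp: dist_norm)

lemma L_closed: "closed (lattice w1 w2)"
  by (rule discrete_imp_closed[OF m0_pos]) (meson L_sep not_le)

lemma L_countable: "countable (lattice w1 w2)"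
  unfolding L_eq by simp

lemma L_infinite: "infinite (lattice w1 w2 - {0})"
proof -
  have inj1: "inj (\<lambda>m::nat. W (int m) 1)" by (auto simp: inj_def W_inj)
  have rng: "range (\<lambda>m::nat. W (int m) 1) \<subseteq> lattice w1 w2 - {0}"
    using W_in W_zero_iff by auto
  note inf = range_inj_infinite[OF inj1]
  show ?thesis
  proof
    assume "finite (lattice w1 w2 - {0})"
    then have "finite (range (\<lambda>m::nat. W (int m) 1))" using rng by (rule finite_subset[rotated])
    then show False using inf by simp
  qed
qed


definition gg :: "nat \<Rightarrow> real" where "gg n = 1 / (real n + 1) powr (3/2)"
definition hh :: "int \<Rightarrow> real" where "hh m = gg (nat \<bar>m\<bar>)"

lemma gg_summable: "summable gg"
proof -
  have "summable (\<lambda>n. real n powr (-3/2))" by (subst summable_real_powr_iff) auto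
  then have "summable (\<lambda>n. real (Suc n) powr (-3/2))" by (subst summable_Suc_iff)
  moreover have "real (Suc n) powr (-3/2) = gg n" for n
    unfolding gg_def by (simp add: powr_minus_divide add.commute)
  ultimately show ?thesis by simp
qed

lemma gg_nonneg: "gg n \<ge> 0" unfolding gg_def by simp
lemma hh_nonneg: "hh n \<ge> 0" unfolding hh_def by (simp add: gg_nonneg)

lemma sum_hh: assumes "finite A" shows "sum hh A \<le> 2 * suminf gg"
proof -
  have s: "sum hh A = sum hh (A \<inter> {0..}) + sum hh (A - {0..})"
    using assms by (metis Diff_eq sum.Int_Diff)
  have "sum hh (A \<inter> {0..}) = sum (gg \<circ> nat) (A \<inter> {0..})"
    unfolding hh_def by (intro sum.cong) auto
  also have "\<dots> = sum gg (nat ` (A \<inter> {0..}))"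
    by (rule sum.reindex[symmetric]) (auto simp: inj_on_def)
  also have "\<dots> \<le> suminf gg"
    using assms by (intro sum_le_suminf gg_summable) (auto simp: gg_nonneg)
  finally have 1: "sum hh (A \<inter> {0..}) \<le> suminf gg" .
  have "sum hh (A - {0..}) = sum (gg \<circ> (\<lambda>x. nat (- x))) (A - {0..})"
    unfolding hh_def by (intro sum.cong) auto
  also have "\<dots> = sum gg ((\<lambda>x. nat (- x)) ` (A - {0..}))"
    by (rule sum.reindex[symmetric]) (auto simp: inj_on_def)
  also have "\<dots> \<le> suminf gg"
    using assms by (intro sum_le_suminf gg_summable) (auto simp: gg_nonneg)
  finally have 2: "sum hh (A - {0..}) \<le> suminf gg" .
  show ?thesis using s 1 2 by linarith
qed

lemma sum_hh2: assumes "finite F" shows "sum (\<lambda>(m,n). hh m * hh n) F \<le> (2 * suminf gg)^2"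
proof -
  have "sum (\<lambda>(m,n). hh m * hh n) F \<le> sum (\<lambda>(m,n). hh m * hh n) (fst ` F \<times> snd ` F)"
    using assms by (intro sum_mono2) (auto simp: hh_nonneg intro: rev_image_eqI)
  also have "\<dots> = sum hh (fst ` F) * sum hh (snd ` F)"
    by (simp add: sum_product sum.cartesian_product)
  also have "\<dots> \<le> (2 * suminf gg) * (2 * suminf gg)"
    using assms suminf_nonneg[OF gg_summable gg_nonneg] by (intro mult_mono sum_hh sum_nonneg hh_nonneg) auto
  finally show ?thesis by (simp add: power2_eq_square)
qed

lemma W_inv_bound: assumes "(m,n) \<noteq> (0,0)"
  shows "1 / cmod (W m n) ^ 3 \<le> 8 / m0^3 * (hh m * hh n)"
proof -
  define sv where "sv = \<bar>real_of_int m\<bar> + \<bar>of_int n\<bar>"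
  have s1: "sv \<ge> 1" using assms unfolding sv_def by auto
  have Ws: "sv * m0 \<le> cmod (W m n)" using W_bound unfolding sv_def by simp
  define a where "a = 1 + \<bar>real_of_int m\<bar>"
  define b where "b = 1 + \<bar>real_of_int n\<bar>"
  have ha: "hh m = 1 / a powr (3/2)" unfolding hh_def gg_def a_def by (simp add: add.commute)
  have hb: "hh n = 1 / b powr (3/2)" unfolding hh_def gg_def b_def by (simp add: add.commute)
  have apos: "a > 0" "b > 0" unfolding a_def b_def by auto
  have "a \<le> 2 * sv" "b \<le> 2 * sv" using s1 unfolding a_def b_def sv_def by auto
  then have "a * b \<le> (2 * sv) * (2 * sv)" using apos by (intro mult_mono) auto
  then have "a * b \<le> (2 * sv)^2" by (simp add: power2_eq_square)
  then have "(a*b) powr (3/2) \<le> ((2 * sv)^2) powr (3/2)"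
    using apos by (intro powr_mono2) auto
  also have "((2 * sv)^2) powr (3/2) = (2 * sv)^3"
  proof -
    have p: "0 < 2 * sv" using s1 by simp
    have "((2 * sv)^2) powr (3/2) = ((2 * sv) powr 2) powr (3/2)" using p by (simp only: powr_numeral)
    also have "\<dots> = (2 * sv) powr (2 * (3/2))" by (simp only: powr_powr)
    also have "\<dots> = (2 * sv) powr 3" by simp
    also have "\<dots> = (2 * sv)^3" using p by (simp only: powr_numeral)
    finally show ?thesis .
  qed
  finally have ab: "(a*b) powr (3/2) \<le> 8 * sv^3" by (simp add: power3_eq_cube)
  have "hh m * hh n = 1 / (a*b) powr (3/2)" using ha hb apos by (simp add: powr_mult)
  also have "\<dots> \<ge> 1 / (8 * sv^3)"
    using ab apos s1 by (intro divide_left_mono) auto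
  finally have hmn: "1 / (8 * sv^3) \<le> hh m * hh n" .
  have "1 / cmod (W m n) ^ 3 \<le> 1 / (sv*m0)^3"
  proof -
    have p: "0 < sv * m0" using s1 m0_pos by simp
    then have "0 < cmod (W m n)" using Ws by linarith
    then show ?thesis using p Ws by (intro divide_left_mono power_mono) auto
  qed
  also have "\<dots> = 8 / m0^3 * (1 / (8 * sv^3))" using m0_pos s1 by (simp add: field_simps)
  also have "\<dots> \<le> 8 / m0^3 * (hh m * hh n)"
    using hmn m0_pos by (intro mult_left_mono) auto
  finally show ?thesis .
qed

lemma L_summable3: "(\<lambda>w. 1 / cmod w ^ 3) summable_on (lattice w1 w2 - {0})"
proof (rule nonneg_bdd_above_summable_on)
  show "bdd_above (sum (\<lambda>w. 1 / cmod w ^ 3) ` {F. F \<subseteq> lattice w1 w2 - {0} \<and> finite F})"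
  proof (rule bdd_aboveI2)
    fix G assume G: "G \<in> {F. F \<subseteq> lattice w1 w2 - {0} \<and> finite F}"
    define F where "F = (\<lambda>(m,n). W m n) -` G"
    have injW: "inj (\<lambda>(m,n). W m n)" by (auto simp: inj_def W_inj)
    have fF: "finite F" unfolding F_def using G injW by (auto intro: finite_vimageI)
    have GF: "G = (\<lambda>(m,n). W m n) ` F" unfolding F_def using G by (auto simp: L_eq)
    have "sum (\<lambda>w. 1 / cmod w ^ 3) G = sum (\<lambda>(m,n). 1 / cmod (W m n) ^ 3) F"
      unfolding GF by (subst sum.reindex) (auto simp: inj_on_def W_inj case_prod_unfold)
    also have "\<dots> \<le> sum (\<lambda>(m,n). 8 / m0^3 * (hh m * hh n)) F"
    proof (intro sum_mono)
      fix p assume "p \<in> F"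
      then have "p \<noteq> (0,0)" using G unfolding F_def by (auto simp: W_zero_iff)
      then show "(case p of (m, n) \<Rightarrow> 1 / cmod (W m n) ^ 3) \<le> (case p of (m, n) \<Rightarrow> 8 / m0 ^ 3 * (hh m * hh n))"
        using W_inv_bound by (cases p) auto
    qed
    also have "\<dots> = 8 / m0^3 * sum (\<lambda>(m,n). hh m * hh n) F"
      by (simp add: sum_distrib_left case_prod_unfold)
    also have "\<dots> \<le> 8 / m0^3 * (2 * suminf gg)^2"
      using m0_pos fF by (intro mult_left_mono sum_hh2) auto
    finally show "sum (\<lambda>w. 1 / cmod w ^ 3) G \<le> 8 / m0^3 * (2 * suminf gg)^2" .
  qed
qed simp

end


context ell begin

abbreviation "Lat \<equiv> lattice w1 w2"

definition en :: "nat \<Rightarrow> complex" where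
  "en = inv_into (Lat - {0}) (SOME e::complex \<Rightarrow> nat. bij_betw e (Lat - {0}) UNIV)"

lemma en_bij: "bij_betw en UNIV (Lat - {0})"
proof -
  have "countable (Lat - {0})" using L_countable by auto
  then obtain e :: "complex \<Rightarrow> nat" where "bij_betw e (Lat - {0}) UNIV"
    using countableE_infinite L_infinite by blast
  then have "\<exists>e::complex \<Rightarrow> nat. bij_betw e (Lat - {0}) UNIV" by blast
  then have "bij_betw (SOME e::complex \<Rightarrow> nat. bij_betw e (Lat - {0}) UNIV) (Lat - {0}) UNIV"
    by (rule someI_ex)
  then show ?thesis unfolding en_def by (rule bij_betw_inv_into)
qed

lemma en_in: "en n \<in> Lat - {0}" using en_bij by (auto simp: bij_betw_def)

lemma sum3_nat: "summable (\<lambda>n. 1 / cmod (en n) ^ 3)"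
proof -
  have "(\<lambda>n. 1 / cmod (en n) ^ 3) summable_on UNIV"
    using summable_on_reindex_bij_betw[OF en_bij, of "\<lambda>w. 1 / cmod w ^ 3"] L_summable3 by simp
  then show ?thesis by (rule summable_on_imp_summable)
qed

lemma L0_closed: "closed (Lat - {0})"
  by (rule discrete_imp_closed[OF m0_pos]) (meson DiffD1 L_sep not_le)

lemma dist_lower:
  assumes "cmod s \<le> R" "r > 0" "r \<le> cmod (s - w)" "R \<ge> 0"
  shows "r / (R + r) * cmod w \<le> cmod (s - w)"
proof (cases "cmod w \<le> R + r")
  case True
  have "r / (R + r) * cmod w \<le> r / (R + r) * (R + r)"
    using True assms by (intro mult_left_mono) auto
  also have "\<dots> = r" using assms by simp
  finally show ?thesis using assms by linarith
next
  case False
  have "cmod w - R \<le> cmod (s - w)"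
    using assms norm_triangle_ineq2[of w s] by (simp add: norm_minus_commute)
  moreover have "r / (R + r) * cmod w \<le> cmod w - R"
  proof -
    have "r * cmod w \<le> (cmod w - R) * (R + r)"
    proof -
      have "0 \<le> R * (cmod w - R - r)" using False assms by (intro mult_nonneg_nonneg) auto
      then show ?thesis by (simp add: algebra_simps)
    qed
    then show ?thesis using assms by (simp add: field_simps)
  qed
  ultimately show ?thesis by linarith
qed

definition F :: "complex \<Rightarrow> complex \<Rightarrow> complex" where
  "F s w = 1 / (s - w)^2 - 1 / w^2"

definition KK :: "real \<Rightarrow> real \<Rightarrow> real" where
  "KK R r = R * (2 + R / m0) * ((R + r) / r)^2"

lemma F_bound:
  assumes "cmod s \<le> R" "r > 0" "r \<le> cmod (s - w)" "w \<in> Lat - {0}"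
  shows "cmod (F s w) \<le> KK R r / cmod w ^ 3"
proof -
  have R0: "R \<ge> 0" using assms(1) norm_ge_zero order.trans by blast
  have wm: "m0 \<le> cmod w" using assms L_norm by auto
  then have wpos: "cmod w > 0" using m0_pos by linarith
  have sw: "s \<noteq> w" using assms by auto
  have w0: "w \<noteq> 0" using wpos by auto
  define c where "c = r / (R + r)"
  have cpos: "c > 0" unfolding c_def using assms R0 by simp
  have dl: "c * cmod w \<le> cmod (s - w)" unfolding c_def by (rule dist_lower[OF assms(1-3) R0])
  have eq: "F s w = s * (2 * w - s) / ((s - w)^2 * w^2)"
  proof -
    have "(s - w)^2 \<noteq> 0" "w^2 \<noteq> 0" using sw w0 by auto
    then have "F s w = (1 * w^2 - 1 * (s - w)^2) / ((s - w)^2 * w^2)"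
      unfolding F_def by (rule diff_frac_eq)
    moreover have "1 * w^2 - 1 * (s - w)^2 = s * (2 * w - s)"
      by (simp add: power2_eq_square algebra_simps)
    ultimately show ?thesis by simp
  qed
  have num: "cmod (s * (2 * w - s)) \<le> R * (2 + R / m0) * cmod w"
  proof -
    have "cmod (2 * w - s) \<le> 2 * cmod w + R"
      using norm_triangle_ineq4[of "2*w" s] assms(1) by (simp add: norm_mult)
    also have "\<dots> \<le> (2 + R / m0) * cmod w"
    proof -
      have "R \<le> R / m0 * cmod w" using wm m0_pos R0
        by (simp add: field_simps mult_left_mono)
      then show ?thesis by (simp add: algebra_simps)
    qed
    finally have a: "cmod (2 * w - s) \<le> (2 + R / m0) * cmod w" .
    have "cmod (s * (2 * w - s)) = cmod s * cmod (2 * w - s)" by (simp add: norm_mult)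
    also have "\<dots> \<le> R * ((2 + R / m0) * cmod w)"
      using a assms(1) R0 by (intro mult_mono) auto
    finally show ?thesis by (simp add: mult.assoc)
  qed
  have den: "(c * cmod w)^2 * cmod w ^ 2 \<le> cmod ((s - w)^2 * w^2)"
  proof -
    have "(c * cmod w)^2 \<le> cmod (s - w) ^ 2"
      using dl cpos wpos by (intro power_mono) auto
    then show ?thesis by (simp add: norm_mult norm_power mult_right_mono)
  qed
  have dpos: "0 < (c * cmod w)^2 * cmod w ^ 2" using cpos wpos by simp
  have "cmod (F s w) = cmod (s * (2 * w - s)) / cmod ((s - w)^2 * w^2)"
    by (simp add: eq norm_divide)
  also have "\<dots> \<le> (R * (2 + R / m0) * cmod w) / ((c * cmod w)^2 * cmod w ^ 2)"
    using num den dpos R0 m0_pos by (intro frac_le) auto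
  also have "\<dots> = KK R r / cmod w ^ 3"
  proof -
    have gen: "A * x / ((c * x)^2 * x^2) = A * (1 / c)^2 / x^3" if "x > 0" "c > 0" for A x c :: real
      using that by (simp add: field_simps power2_eq_square power3_eq_cube)
    have "1 / c = (R + r) / r" unfolding c_def by simp
    then show ?thesis unfolding KK_def using gen[OF wpos cpos, of "R * (2 + R / m0)"] by simp
  qed
  finally show ?thesis .
qed

lemma F_deriv: assumes "x \<noteq> w"
  shows "((\<lambda>x. F x w) has_field_derivative (-2 / (x - w)^3)) (at x)"
proof -
  have t: "t \<noteq> 0 \<Longrightarrow> - (2 * t * inverse ((t^2) ^ Suc (Suc 0))) = -2 / t^3" for t :: complex
    by (simp add: power2_eq_square power3_eq_cube field_simps)
  have d1: "((\<lambda>x. (x - w) ^ 2) has_field_derivative 2 * (x - w)) (at x)"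
    by (auto intro!: derivative_eq_intros)
  have d2: "((\<lambda>x. inverse ((x - w)^2)) has_field_derivative - (2 * (x - w) * inverse (((x - w)^2) ^ Suc (Suc 0)))) (at x)"
    by (rule DERIV_inverse_fun[OF d1]) (use assms in simp)
  have d3: "((\<lambda>x. inverse ((x - w)^2) - 1 / w^2) has_field_derivative - (2 * (x - w) * inverse (((x - w)^2) ^ Suc (Suc 0))) - 0) (at x)"
    by (rule DERIV_diff[OF d2 DERIV_const])
  have e: "(\<lambda>x. F x w) = (\<lambda>x. inverse ((x - w)^2) - 1 / w^2)"
    unfolding F_def by (simp add: inverse_eq_divide)
  show ?thesis using d3 t[of "x - w"] assms unfolding e by simp
qed

end


context ell begin

abbreviation "S0 \<equiv> UNIV - (Lat - {0})"

lemma S0_open: "open S0" using L0_closed by (simp add: open_Diff)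

lemma S0_sep: assumes "x \<in> S0" shows "\<exists>r>0. ball x r \<subseteq> S0"
  using S0_open assms open_contains_ball by blast

lemma S0_sep': assumes "x \<in> S0" shows "\<exists>r>0. \<forall>w\<in>Lat - {0}. r \<le> cmod (x - w)"
proof -
  obtain r where r: "r > 0" "ball x r \<subseteq> S0" using S0_sep[OF assms] by blast
  have "r \<le> cmod (x - w)" if "w \<in> Lat - {0}" for w
  proof (rule ccontr)
    assume "\<not> r \<le> cmod (x - w)"
    then have "w \<in> ball x r" by (simp add: dist_norm)
    then show False using r that by auto
  qed
  then show ?thesis using r by blast
qed

lemma KK_nonneg: "R \<ge> 0 \<Longrightarrow> r > 0 \<Longrightarrow> KK R r \<ge> 0"
  unfolding KK_def using m0_pos by (simp add: add_nonneg_nonneg)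

lemma F_summable: assumes "x \<in> S0"
  shows "(\<lambda>w. F x w) summable_on (Lat - {0})"
proof -
  obtain r where r: "r > 0" "\<forall>w\<in>Lat - {0}. r \<le> cmod (x - w)" using S0_sep'[OF assms] by blast
  have "(\<lambda>w. norm (F x w)) summable_on (Lat - {0})"
  proof (rule summable_on_comparison_test)
    show "(\<lambda>w. norm (KK (cmod x) r * (1 / cmod w ^ 3))) summable_on (Lat - {0})"
      using summable_on_cmult_right[OF L_summable3, of "\<bar>KK (cmod x) r\<bar>"]
      by (simp add: abs_mult)
    show "norm (F x w) \<le> norm (KK (cmod x) r * (1 / cmod w ^ 3))" if "w \<in> Lat - {0}" for w
      using F_bound[of x "cmod x" r w] r that KK_nonneg[of "cmod x" r] by simp
  qed simp
  then show ?thesis by (rule Infinite_Sum.abs_summable_summable)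
qed

lemma cube_summable: assumes "x \<in> S0"
  shows "(\<lambda>w. -2 / (x - w)^3) summable_on (Lat - {0})"
proof -
  obtain r where r: "r > 0" "\<forall>w\<in>Lat - {0}. r \<le> cmod (x - w)" using S0_sep'[OF assms] by blast
  define c where "c = r / (cmod x + r)"
  have cpos: "c > 0" unfolding c_def using r by (simp add: add_nonneg_pos)
  have "(\<lambda>w. norm (-2 / (x - w)^3)) summable_on (Lat - {0})"
  proof (rule summable_on_comparison_test)
    show "(\<lambda>w. norm ((2 / c^3) * (1 / cmod w ^ 3))) summable_on (Lat - {0})"
      using summable_on_cmult_right[OF L_summable3, of "2 / c^3"] cpos
      by simp
    show "norm (-2 / (x - w)^3) \<le> norm ((2 / c^3) * (1 / cmod w ^ 3))" if w: "w \<in> Lat - {0}" for w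
    proof -
      have dl: "c * cmod w \<le> cmod (x - w)"
        unfolding c_def using dist_lower[of x "cmod x" r w] r w by auto
      have wpos: "cmod w > 0" using w L_norm m0_pos by fastforce
      have "(c * cmod w)^3 \<le> cmod (x - w) ^ 3"
        using dl cpos wpos by (intro power_mono) auto
      moreover have "0 < c * cmod w" using cpos wpos by simp
      moreover have "0 < cmod (x - w)" using calculation(2) dl by linarith
      ultimately have "2 / cmod (x - w) ^ 3 \<le> 2 / (c * cmod w)^3"
        using dl cpos wpos by (intro divide_left_mono mult_pos_pos zero_less_power) auto
      then show ?thesis using cpos wpos
        by (simp add: norm_divide norm_power power_mult_distrib)
    qed
  qed simp
  then show ?thesis by (rule Infinite_Sum.abs_summable_summable)
qed

definition f0 :: "complex \<Rightarrow> complex" where "f0 s = infsum (F s) (Lat - {0})"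
definition f1 :: "complex \<Rightarrow> complex" where "f1 s = infsum (\<lambda>w. -2 / (s - w)^3) (Lat - {0})"

lemma wp_eq: "wp w1 w2 = (\<lambda>s. 1 / s^2 + f0 s)"
proof -
  have "F s = (\<lambda>w. 1 / (s - w)^2 - 1 / w^2)" for s by (rule ext) (simp add: F_def)
  then show ?thesis by (intro ext) (simp add: wp_def f0_def)
qed

lemma f0_deriv: assumes "x \<in> S0" shows "(f0 has_field_derivative f1 x) (at x)"
proof -
  have hfd: "\<And>n x. x \<in> S0 \<Longrightarrow> ((\<lambda>x. F x (en n)) has_field_derivative (-2 / (x - en n)^3)) (at x)"
    using en_in by (intro F_deriv) auto
  have to_g: "\<exists>d h. 0 < d \<and> summable h \<and> (\<forall>\<^sub>F n in sequentially. \<forall>y\<in>ball x d \<inter> S0. norm (F y (en n)) \<le> h n)"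
    if xS: "x \<in> S0" for x
  proof -
    obtain e where e: "e > 0" "ball x e \<subseteq> S0" using S0_sep[OF xS] by blast
    define d where "d = e / 2"
    have dpos: "d > 0" using e unfolding d_def by simp
    define h where "h n = KK (cmod x + d) d * (1 / cmod (en n) ^ 3)" for n
    have "summable h" unfolding h_def by (intro summable_mult sum3_nat)
    moreover have "norm (F y (en n)) \<le> h n" if y: "y \<in> ball x d" for y n
    proof -
      have w: "en n \<in> Lat - {0}" by (rule en_in)
      then have "en n \<notin> ball x e" using e by auto
      then have "e \<le> dist x (en n)" by simp
      moreover have "dist x y < d" using y by simp
      ultimately have "d \<le> dist y (en n)" using dist_triangle[of x "en n" y] unfolding d_def
        by (simp add: dist_commute)
      then have "d \<le> cmod (y - en n)" by (simp add: dist_norm)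
      moreover have "cmod y \<le> cmod x + d"
        using y norm_triangle_ineq2[of y x] by (simp add: dist_norm norm_minus_commute)
      ultimately show ?thesis unfolding h_def using F_bound[of y "cmod x + d" d "en n"] w dpos by simp
    qed
    ultimately show ?thesis using dpos by (intro exI[of _ d] exI[of _ h]) auto
  qed
  obtain g g' where gg: "\<forall>x\<in>S0. ((\<lambda>n. F x (en n)) sums g x) \<and> ((\<lambda>n. -2 / (x - en n)^3) sums g' x)
      \<and> (g has_field_derivative g' x) (at x)"
    using series_and_derivative_comparison_local[OF S0_open hfd to_g] by blast
  have eq0: "f0 y = g y" if "y \<in> S0" for y
  proof -
    have "(\<lambda>n. F y (en n)) summable_on UNIV"
      using summable_on_reindex_bij_betw[OF en_bij, of "F y"] F_summable[OF that] by simp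
    then have "(\<lambda>n. F y (en n)) sums (infsum (\<lambda>n. F y (en n)) UNIV)"
      by (intro has_sum_imp_sums has_sum_infsum)
    moreover have "infsum (\<lambda>n. F y (en n)) UNIV = f0 y"
      unfolding f0_def by (rule infsum_reindex_bij_betw[OF en_bij])
    ultimately show ?thesis using gg that sums_unique2 by metis
  qed
  have eq1: "f1 x = g' x"
  proof -
    have "(\<lambda>n. -2 / (x - en n)^3) summable_on UNIV"
      using summable_on_reindex_bij_betw[OF en_bij, of "\<lambda>w. -2 / (x - w)^3"] cube_summable[OF assms] by simp
    then have "(\<lambda>n. -2 / (x - en n)^3) sums (infsum (\<lambda>n. -2 / (x - en n)^3) UNIV)"
      by (intro has_sum_imp_sums has_sum_infsum)
    moreover have "infsum (\<lambda>n. -2 / (x - en n)^3) UNIV = f1 x"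
      unfolding f1_def by (rule infsum_reindex_bij_betw[OF en_bij])
    ultimately show ?thesis using gg assms sums_unique2 by metis
  qed
  have "(g has_field_derivative f1 x) (at x)" using gg assms eq1 by auto
  then show ?thesis
    by (rule has_field_derivative_transform_within_open[OF _ S0_open assms]) (simp add: eq0)
qed

lemma f0_holo: "f0 holomorphic_on S0"
  using f0_deriv S0_open by (auto simp: holomorphic_on_def field_differentiable_def at_within_open[OF _ S0_open])

lemma deriv_f0: "x \<in> S0 \<Longrightarrow> deriv f0 x = f1 x"
  using f0_deriv DERIV_imp_deriv by blast

end


context ell begin

definition P1 :: "complex \<Rightarrow> complex" where "P1 s = infsum (\<lambda>w. -2 / (s - w)^3) Lat"

lemma P1_eq: assumes "x \<in> S0" shows "P1 x = -2 / x^3 + f1 x"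
proof -
  have "Lat = {0} \<union> (Lat - {0})" using L_zero by auto
  then have "P1 x = infsum (\<lambda>w. -2 / (x - w)^3) ({0} \<union> (Lat - {0}))" unfolding P1_def by simp
  also have "\<dots> = infsum (\<lambda>w. -2 / (x - w)^3) {0} + infsum (\<lambda>w. -2 / (x - w)^3) (Lat - {0})"
    by (rule infsum_Un_disjoint[OF _ cube_summable[OF assms]]) auto
  also have "\<dots> = -2 / x^3 + f1 x" unfolding f1_def by simp
  finally show ?thesis .
qed

lemma inv_sq_deriv: fixes x :: complex shows "x \<noteq> 0 \<Longrightarrow> ((\<lambda>s. 1 / s^2) has_field_derivative (-2 / x^3)) (at x)"
proof -
  assume x: "x \<noteq> 0"
  have "(\<lambda>s. 1 / s^2) = (\<lambda>s. F s 0)" by (rule ext) (simp add: F_def)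
  then show ?thesis using F_deriv[of x 0] x by simp
qed

lemma notL_S0: "x \<notin> Lat \<Longrightarrow> x \<in> S0" by auto

lemma wp_deriv: assumes "x \<notin> Lat" shows "(wp w1 w2 has_field_derivative P1 x) (at x)"
proof -
  have x0: "x \<noteq> 0" using assms L_zero by auto
  have "((\<lambda>s. 1 / s^2 + f0 s) has_field_derivative (-2 / x^3 + f1 x)) (at x)"
    by (rule DERIV_add[OF inv_sq_deriv[OF x0] f0_deriv[OF notL_S0[OF assms]]])
  then show ?thesis unfolding wp_eq P1_eq[OF notL_S0[OF assms]] .
qed

lemma shift_bij: assumes "p \<in> Lat" shows "bij_betw (\<lambda>v. v + p) Lat Lat"
proof (rule bij_betwI[where g="\<lambda>v. v - p"])
  show "(\<lambda>v. v + p) \<in> Lat \<rightarrow> Lat" using L_add assms by auto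
  show "(\<lambda>v. v - p) \<in> Lat \<rightarrow> Lat" using L_diff assms by auto
qed auto

lemma P1_periodic: assumes "p \<in> Lat" shows "P1 (s + p) = P1 s"
proof -
  have "infsum (\<lambda>v. (\<lambda>w. -2 / (s + p - w)^3) (v + p)) Lat = infsum (\<lambda>w. -2 / (s + p - w)^3) Lat"
    by (rule infsum_reindex_bij_betw[OF shift_bij[OF assms]])
  then show ?thesis unfolding P1_def by (simp add: algebra_simps)
qed

lemma neg_bij: "bij_betw uminus (Lat - {0}) (Lat - {0})"
proof (rule bij_betwI[where g="uminus"])
  show "uminus \<in> Lat - {0} \<rightarrow> Lat - {0}" using L_minus by auto
qed (use L_minus in auto)

lemma f0_even: "f0 (-s) = f0 s"
proof -
  have "infsum (\<lambda>v. F (-s) (- v)) (Lat - {0}) = infsum (F (-s)) (Lat - {0})"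
    by (rule infsum_reindex_bij_betw[OF neg_bij])
  moreover have "F (-s) (- v) = F s v" for v
    unfolding F_def by (simp add: power2_eq_square algebra_simps)
  ultimately show ?thesis unfolding f0_def by simp
qed

lemma wp_even: "wp w1 w2 (-s) = wp w1 w2 s"
  unfolding wp_eq using f0_even by simp

lemma f0_zero: "f0 0 = 0"
  unfolding f0_def F_def by simp

lemma notL_open: "open (UNIV - Lat)" using L_closed by (simp add: open_Diff)

lemma notL_conn: "connected (UNIV - Lat)"
  by (rule connected_open_diff_countable) (auto simp: L_countable)

lemma half_notin: "w1 \<notin> Lat" "w2 \<notin> Lat"
proof -
  show "w1 \<notin> Lat"
  proof
    assume "w1 \<in> Lat"
    then obtain m n where "w1 = W m n" using L_cases by blast
    then have "of_real (2 * of_int m - 1) * w1 + of_real (2 * of_int n) * w2 = 0"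
      unfolding W_real by (simp add: algebra_simps)
    then have "2 * real_of_int m - 1 = 0" by (rule indep)
    then have "2 * m = 1" by linarith
    then show False by presburger
  qed
  show "w2 \<notin> Lat"
  proof
    assume "w2 \<in> Lat"
    then obtain m n where "w2 = W m n" using L_cases by blast
    then have "of_real (2 * of_int m) * w1 + of_real (2 * of_int n - 1) * w2 = 0"
      unfolding W_real by (simp add: algebra_simps)
    then have "2 * real_of_int n - 1 = 0" by (rule indep)
    then have "2 * n = 1" by linarith
    then show False by presburger
  qed
qed

lemma notL_add: "s \<notin> Lat \<Longrightarrow> p \<in> Lat \<Longrightarrow> s + p \<notin> Lat"
  using L_diff[of "s + p" p] by auto

lemma wp_shift_const: assumes "p \<in> Lat"
  shows "\<exists>c. \<forall>s\<in>UNIV - Lat. wp w1 w2 (s + p) - wp w1 w2 s = c"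
proof -
  define Q where "Q s = wp w1 w2 (s + p) - wp w1 w2 s" for s
  have dQ: "(Q has_field_derivative 0) (at x)" if x: "x \<in> UNIV - Lat" for x
  proof -
    have "((\<lambda>s. wp w1 w2 (s + p)) has_field_derivative P1 (x + p)) (at x)"
      using wp_deriv[OF notL_add[of x p]] x assms DERIV_shift by blast
    then have "(Q has_field_derivative P1 (x + p) - P1 x) (at x)"
      unfolding Q_def using wp_deriv[of x] x by (intro DERIV_diff) auto
    then show ?thesis using P1_periodic[OF assms] by simp
  qed
  have "continuous_on (UNIV - Lat) Q"
    using dQ by (intro continuous_at_imp_continuous_on) (auto intro: DERIV_isCont)
  then obtain c where "\<And>x. x \<in> UNIV - Lat \<Longrightarrow> Q x = c"
    using DERIV_zero_connected_constant[OF notL_conn notL_open, of "{}" Q] dQ by auto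
  then show ?thesis unfolding Q_def by blast
qed

definition cst :: "complex \<Rightarrow> complex" where "cst p = wp w1 w2 (w1 + p) - wp w1 w2 w1"

lemma cst_prop: assumes "p \<in> Lat" "s \<notin> Lat" shows "wp w1 w2 (s + p) - wp w1 w2 s = cst p"
proof -
  obtain c where c: "\<forall>s\<in>UNIV - Lat. wp w1 w2 (s + p) - wp w1 w2 s = c" using wp_shift_const[OF assms(1)] by blast
  then show ?thesis using assms half_notin unfolding cst_def by auto
qed

lemma cst_add: assumes "p \<in> Lat" "q \<in> Lat" shows "cst (p + q) = cst p + cst q"
proof -
  have "cst (p + q) = wp w1 w2 (w1 + (p + q)) - wp w1 w2 w1"
    using cst_prop[OF L_add[OF assms] half_notin(1)] by simp
  also have "\<dots> = (wp w1 w2 ((w1 + q) + p) - wp w1 w2 (w1 + q)) + (wp w1 w2 (w1 + q) - wp w1 w2 w1)"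
    by (simp add: algebra_simps)
  also have "\<dots> = cst p + cst q"
    using cst_prop[OF assms(1) notL_add[OF half_notin(1) assms(2)]] cst_prop[OF assms(2) half_notin(1)] by simp
  finally show ?thesis .
qed

lemma cst_gen: "cst (2 * w1) = 0" "cst (2 * w2) = 0"
proof -
  have a: "2 * w1 \<in> Lat" using W_in[of 1 0] unfolding W_def by simp
  have "- w1 \<notin> Lat" using half_notin L_minus by fastforce
  then have "wp w1 w2 (- w1 + 2 * w1) - wp w1 w2 (- w1) = cst (2 * w1)" by (rule cst_prop[OF a])
  then show "cst (2 * w1) = 0" using wp_even[of w1] by simp
  have b: "2 * w2 \<in> Lat" using W_in[of 0 1] unfolding W_def by simp
  have "- w2 \<notin> Lat" using half_notin L_minus by fastforce
  then have "wp w1 w2 (- w2 + 2 * w2) - wp w1 w2 (- w2) = cst (2 * w2)" by (rule cst_prop[OF b])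
  then show "cst (2 * w2) = 0" using wp_even[of w2] by simp
qed

lemma cst_W: "cst (W m n) = 0"
proof -
  have a: "W 1 0 = 2 * w1" "W 0 1 = 2 * w2" unfolding W_def by simp_all
  have c0: "cst 0 = 0" using cst_add[OF L_zero L_zero] by simp
  have cneg: "cst (- p) = - cst p" if "p \<in> Lat" for p
    using cst_add[OF that L_minus[OF that]] c0 by (simp add: eq_neg_iff_add_eq_0 add.commute)
  have m: "cst (W m 0) = 0" for m
  proof (induction m rule: int_induct[where k=0])
    case base
    have "W 0 0 = 0" by (simp add: W_zero_iff)
    then show ?case using c0 by simp
  next
    case (step1 i)
    have "W (i + 1) 0 = W i 0 + W 1 0" by (simp add: W_add)
    then show ?case using cst_add[OF W_in W_in, of i 0 1 0] step1 a cst_gen by simp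
  next
    case (step2 i)
    have "W (i - 1) 0 = W i 0 + (- W 1 0)" by (simp add: W_add W_minus)
    then show ?case using cst_add[OF W_in L_minus[OF W_in], of i 0 1 0] step2 a cst_gen cneg[OF W_in, of 1 0] by simp
  qed
  have n: "cst (W 0 n) = 0" for n
  proof (induction n rule: int_induct[where k=0])
    case base
    have "W 0 0 = 0" by (simp add: W_zero_iff)
    then show ?case using c0 by simp
  next
    case (step1 i)
    have "W 0 (i + 1) = W 0 i + W 0 1" by (simp add: W_add)
    then show ?case using cst_add[OF W_in W_in, of 0 i 0 1] step1 a cst_gen by simp
  next
    case (step2 i)
    have "W 0 (i - 1) = W 0 i + (- W 0 1)" by (simp add: W_add W_minus)
    then show ?case using cst_add[OF W_in L_minus[OF W_in], of 0 i 0 1] step2 a cst_gen cneg[OF W_in, of 0 1] by simp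
  qed
  have "W m n = W m 0 + W 0 n" by (simp add: W_add)
  then show ?thesis using cst_add[OF W_in W_in, of m 0 0 n] m n by simp
qed

lemma wp_periodic: assumes "p \<in> Lat" "s \<notin> Lat" shows "wp w1 w2 (s + p) = wp w1 w2 s"
proof -
  obtain m n where "p = W m n" using L_cases assms by blast
  then show ?thesis using cst_prop[OF assms] cst_W by simp
qed

end


context ell begin

lemma pair_eq: assumes "s \<noteq> w" "s \<noteq> - w" "w \<noteq> 0"
  shows "F s w + F s (-w) = (6 * s^2 * w^2 - 2 * s^4) / ((s^2 - w^2)^2 * w^2)"
proof -
  have a: "s - w \<noteq> 0" "s + w \<noteq> 0" using assms by (auto simp: add_eq_0_iff)
  have e1: "F s w + F s (-w) = 1/(s-w)^2 + 1/(s+w)^2 - 2/w^2" unfolding F_def by simp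
  have e2: "1/u^2 + 1/v^2 - 2/w^2 = ((u^2 + v^2)*w^2 - 2*(u * v)^2)/((u * v)^2*w^2)"
    if "u \<noteq> 0" "v \<noteq> 0" for u v :: complex
    using that assms by (simp add: field_simps power2_eq_square)
  have e3: "(s-w)*(s+w) = s^2 - w^2" by (simp add: power2_eq_square algebra_simps)
  have e4: "((s - w)^2 + (s + w)^2) * w^2 - 2 * (s^2 - w^2)^2 = 6 * s^2 * w^2 - 2 * s^4" by (simp add: power2_eq_square power4_eq_xxxx algebra_simps)
  show ?thesis unfolding e1 e2[OF a] e3 e4 ..
qed

lemma pair_bound: assumes "cmod s \<le> m0 / 2" "w \<in> Lat - {0}"
  shows "cmod (F s w + F s (-w)) \<le> 13 * cmod s ^ 2 / m0 * (1 / cmod w ^ 3)"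
proof -
  have wm: "m0 \<le> cmod w" using assms L_norm by auto
  have w0: "w \<noteq> 0" using assms by auto
  define a where "a = cmod s"
  define b where "b = cmod w"
  have a0: "0 \<le> a" unfolding a_def by simp
  have ab: "2 * a \<le> b" using assms(1) wm unfolding a_def b_def by linarith
  have bpos: "b > 0" using wm m0_pos unfolding b_def by linarith
  have sw: "s \<noteq> w" "s \<noteq> - w" using ab bpos unfolding a_def b_def by auto
  have num: "cmod (6 * s^2 * w^2 - 2 * s^4) \<le> 7 * a^2 * b^2"
  proof -
    have "cmod (6 * s^2 * w^2 - 2 * s^4) \<le> cmod (6 * s^2 * w^2) + cmod (2 * s^4)"
      by (rule norm_triangle_ineq4)
    also have "\<dots> = 6 * a^2 * b^2 + 2 * a^4" unfolding a_def b_def by (simp add: norm_mult norm_power)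
    also have "\<dots> \<le> 7 * a^2 * b^2"
    proof -
      have "(2 * a) * (2 * a) \<le> b * b" by (rule mult_mono) (use ab a0 in auto)
      then have "a^2 * (4 * a^2) \<le> a^2 * b^2"
        by (intro mult_left_mono) (auto simp: power2_eq_square)
      moreover have "0 \<le> a^4" using a0 by simp
      ultimately show ?thesis by (simp add: power4_eq_xxxx power2_eq_square algebra_simps)
    qed
    finally show ?thesis .
  qed
  have den1: "3/4 * b^2 \<le> cmod (s^2 - w^2)"
  proof -
    have "cmod (w^2) - cmod (s^2) \<le> cmod (s^2 - w^2)"
      using norm_triangle_ineq2[of "w^2" "s^2"] by (simp add: norm_minus_commute)
    moreover have "a^2 \<le> b^2 / 4"
    proof -
      have "(2 * a) * (2 * a) \<le> b * b" by (rule mult_mono) (use ab a0 in auto)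
      then show ?thesis by (simp add: power2_eq_square)
    qed
    ultimately show ?thesis unfolding a_def b_def by (simp add: norm_power)
  qed
  have den: "9/16 * b^6 \<le> cmod ((s^2 - w^2)^2 * w^2)"
  proof -
    have "(3/4 * b^2)^2 \<le> cmod (s^2 - w^2) ^ 2" using den1 bpos by (intro power_mono) auto
    then have "(3/4 * b^2)^2 * b^2 \<le> cmod (s^2 - w^2) ^ 2 * b^2" by (intro mult_right_mono) auto
    moreover have "(3/4 * b^2)^2 * b^2 = 9/16 * b^6" by (simp add: power2_eq_square eval_nat_numeral)
    ultimately show ?thesis unfolding b_def by (simp add: norm_mult norm_power)
  qed
  have "cmod (F s w + F s (-w)) = cmod (6 * s^2 * w^2 - 2 * s^4) / cmod ((s^2 - w^2)^2 * w^2)"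
    by (simp add: pair_eq[OF sw w0] norm_divide)
  also have "\<dots> \<le> (7 * a^2 * b^2) / (9/16 * b^6)"
    using num den bpos by (intro frac_le) auto
  also have "\<dots> = (112/9) * a^2 / b^4"
    using bpos by (simp add: field_simps eval_nat_numeral)
  also have "\<dots> \<le> 13 * a^2 / b^4"
    using bpos a0 by (intro divide_right_mono mult_right_mono) auto
  also have "\<dots> \<le> 13 * a^2 / m0 * (1 / b^3)"
  proof -
    have "13 * a^2 / b^4 = 13 * a^2 * (1 / (b * b^3))" by (simp add: eval_nat_numeral)
    also have "\<dots> \<le> 13 * a^2 * (1 / (m0 * b^3))"
      using wm bpos m0_pos a0 unfolding b_def
      by (intro mult_left_mono divide_left_mono mult_right_mono) auto
    finally show ?thesis by simp
  qed
  finally show ?thesis unfolding a_def b_def .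
qed

definition S3 :: real where "S3 = infsum (\<lambda>w. 1 / cmod w ^ 3) (Lat - {0})"

lemma small_S0: "cmod s < m0 \<Longrightarrow> s \<in> S0"
  using L_norm by fastforce

lemma f0_small: assumes "cmod s \<le> m0 / 2"
  shows "cmod (f0 s) \<le> 13 * S3 / (2 * m0) * cmod s ^ 2"
proof -
  have sS: "s \<in> S0" using assms m0_pos by (intro small_S0) linarith
  have s1: "F s summable_on (Lat - {0})" using F_summable[OF sS] by simp
  have s2: "(\<lambda>w. F s (-w)) summable_on (Lat - {0})"
    using summable_on_reindex_bij_betw[OF neg_bij, of "F s"] s1 by simp
  have "f0 s = infsum (\<lambda>w. F s (-w)) (Lat - {0})"
    unfolding f0_def by (rule infsum_reindex_bij_betw[OF neg_bij, symmetric])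
  then have "2 * f0 s = infsum (\<lambda>w. F s w + F s (-w)) (Lat - {0})"
    using infsum_add[OF s1 s2] unfolding f0_def by simp
  define K where "K = 13 * cmod s ^ 2 / m0"
  have K0: "K \<ge> 0" unfolding K_def using m0_pos by simp
  have bnd: "norm (F s w + F s (-w)) \<le> K * (1 / cmod w ^ 3)" if "w \<in> Lat - {0}" for w
    unfolding K_def using pair_bound[OF assms that] by simp
  have sK: "(\<lambda>w. K * (1 / cmod w ^ 3)) summable_on (Lat - {0})"
    by (rule summable_on_cmult_right[OF L_summable3])
  have sn: "(\<lambda>w. norm (F s w + F s (-w))) summable_on (Lat - {0})"
    by (rule summable_on_comparison_test[OF sK]) (use bnd in auto)
  have "cmod (2 * f0 s) \<le> infsum (\<lambda>w. norm (F s w + F s (-w))) (Lat - {0})"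
    unfolding \<open>2 * f0 s = _\<close> by (rule norm_infsum_bound) (use sn in simp)
  also have "\<dots> \<le> infsum (\<lambda>w. K * (1 / cmod w ^ 3)) (Lat - {0})"
    by (rule infsum_mono[OF sn sK]) (use bnd in auto)
  also have "\<dots> = K * S3" unfolding S3_def by (rule infsum_cmult_right) (rule L_summable3)
  finally have "2 * cmod (f0 s) \<le> K * S3" by (simp add: norm_mult)
  then show ?thesis unfolding K_def using m0_pos by (simp add: field_simps)
qed

end


lemma deriv_shift_gen: "deriv (\<lambda>t. f (t + p)) s = deriv f (s + p)"
  unfolding deriv_def by (simp add: DERIV_shift)

lemma cube_deriv: fixes x :: complex assumes "x \<noteq> 0"
  shows "((\<lambda>t. -2 / t^3) has_field_derivative 6 / x^4) (at x)"
proof -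
  have d1: "((\<lambda>t. t^3) has_field_derivative 3 * x^2) (at x)"
    by (auto intro!: derivative_eq_intros)
  have d2: "((\<lambda>t. inverse (t^3)) has_field_derivative - (3 * x^2 * inverse ((x^3) ^ Suc (Suc 0)))) (at x)"
    by (rule DERIV_inverse_fun[OF d1]) (use assms in simp)
  have d3: "((\<lambda>t. -2 * inverse (t^3)) has_field_derivative -2 * (- (3 * x^2 * inverse ((x^3) ^ Suc (Suc 0))))) (at x)"
    by (rule DERIV_cmult[OF d2])
  have e: "-2 * (- (3 * x^2 * inverse ((x^3) ^ Suc (Suc 0)))) = 6 / x^4"
    using assms by (simp add: field_simps eval_nat_numeral)
  have f: "(\<lambda>t. -2 * inverse (t^3)) = (\<lambda>t::complex. -2 / t^3)" by (simp add: divide_inverse)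
  show ?thesis using d3 unfolding e f .
qed

context ell begin

definition P2 :: "complex \<Rightarrow> complex" where "P2 = deriv P1"
definition f2 :: "complex \<Rightarrow> complex" where "f2 = deriv (deriv f0)"

lemma df0_holo: "deriv f0 holomorphic_on S0" by (rule holomorphic_deriv[OF f0_holo S0_open])
lemma f2_holo: "f2 holomorphic_on S0" unfolding f2_def by (rule holomorphic_deriv[OF df0_holo S0_open])

lemma P1_on_S0: "x \<in> S0 \<Longrightarrow> P1 x = -2 / x^3 + deriv f0 x"
  using P1_eq deriv_f0 by simp

lemma df0_deriv: "x \<in> S0 \<Longrightarrow> (deriv f0 has_field_derivative f2 x) (at x)"
proof -
  assume "x \<in> S0"
  then have "deriv f0 field_differentiable (at x)"
    by (intro holomorphic_on_imp_differentiable_at[OF df0_holo S0_open])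
  then show ?thesis unfolding f2_def by (simp add: DERIV_deriv_iff_field_differentiable)
qed

lemma P2_near: assumes "x \<in> S0" "x \<noteq> 0" shows "P2 x = 6 / x^4 + f2 x"
proof -
  have op: "open (S0 - {0})" using S0_open by (simp add: open_Diff)
  have ev: "eventually (\<lambda>t. P1 t = -2 / t^3 + deriv f0 t) (nhds x)"
    using op assms P1_on_S0 by (intro eventually_nhds_in_open[THEN eventually_mono]) auto
  have "P2 x = deriv (\<lambda>t. -2 / t^3 + deriv f0 t) x"
    unfolding P2_def by (rule deriv_cong_ev[OF ev refl])
  also have "\<dots> = 6 / x^4 + f2 x"
    by (rule DERIV_imp_deriv[OF DERIV_add[OF cube_deriv[OF assms(2)] df0_deriv[OF assms(1)]]])
  finally show ?thesis .
qed

lemma P1_holo: "P1 holomorphic_on (UNIV - Lat)"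
proof -
  have a: "(\<lambda>t. -2 / t^3) holomorphic_on (UNIV - Lat)"
    by (intro holomorphic_intros) (use L_zero in auto)
  have b: "deriv f0 holomorphic_on UNIV - Lat" by (rule holomorphic_on_subset[OF df0_holo]) auto
  have "(\<lambda>t. -2 / t^3 + deriv f0 t) holomorphic_on (UNIV - Lat)"
    by (rule holomorphic_on_add[OF a b])
  then show ?thesis
  proof (rule holomorphic_transform)
    fix x assume "x \<in> UNIV - Lat"
    then have "x \<in> S0" by auto
    then show "-2 / x^3 + deriv f0 x = P1 x" using P1_on_S0 by simp
  qed
qed

lemma P1_deriv: "x \<notin> Lat \<Longrightarrow> (P1 has_field_derivative P2 x) (at x)"
proof -
  assume "x \<notin> Lat"
  then have "P1 field_differentiable (at x)"
    by (intro holomorphic_on_imp_differentiable_at[OF P1_holo notL_open]) auto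
  then show ?thesis unfolding P2_def by (simp add: DERIV_deriv_iff_field_differentiable)
qed

lemma P2_holo: "P2 holomorphic_on (UNIV - Lat)"
  unfolding P2_def by (rule holomorphic_deriv[OF P1_holo notL_open])

lemma P2_periodic: assumes "p \<in> Lat" shows "P2 (s + p) = P2 s"
proof -
  have "(\<lambda>t. P1 (t + p)) = P1" using P1_periodic[OF assms] by (rule ext)
  then show ?thesis unfolding P2_def using deriv_shift_gen[of P1 p s] by simp
qed

lemma wp_holo: "wp w1 w2 holomorphic_on (UNIV - Lat)"
  using wp_deriv notL_open
  by (auto simp: holomorphic_on_def field_differentiable_def at_within_open[OF _ notL_open])

definition H :: "complex \<Rightarrow> complex" where "H s = P2 s - 6 * (wp w1 w2 s)^2"

lemma H_holo: "H holomorphic_on (UNIV - Lat)"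
  unfolding H_def by (intro holomorphic_intros P2_holo wp_holo)

lemma H_periodic: "s \<notin> Lat \<Longrightarrow> p \<in> Lat \<Longrightarrow> H (s + p) = H s"
  unfolding H_def using P2_periodic wp_periodic by simp

lemma H_near: assumes "0 < cmod x" "cmod x \<le> m0 / 2"
  shows "H x = f2 x - 12 * (f0 x / x^2) - 6 * (f0 x)^2"
proof -
  have x0: "x \<noteq> 0" using assms by auto
  have xS: "x \<in> S0" using assms m0_pos by (intro small_S0) linarith
  have "H x = 6 / x^4 + f2 x - 6 * (1 / x^2 + f0 x)^2"
    unfolding H_def P2_near[OF xS x0] wp_eq by simp
  also have "\<dots> = f2 x - 12 * (f0 x / x^2) - 6 * (f0 x)^2"
    using x0 by (simp add: field_simps power2_eq_square eval_nat_numeral)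
  finally show ?thesis .
qed

lemma H_near_bound: "\<exists>B. \<forall>x. 0 < cmod x \<and> cmod x \<le> m0 / 2 \<longrightarrow> cmod (H x) \<le> B"
proof -
  have cb: "cball 0 (m0 / 2) \<subseteq> S0" using m0_pos by (auto intro!: small_S0)
  have "compact (f2 ` cball 0 (m0 / 2))"
    using f2_holo cb by (intro compact_continuous_image holomorphic_on_imp_continuous_on) (auto elim: holomorphic_on_subset)
  then obtain B2 where B2: "\<And>x. x \<in> cball 0 (m0 / 2) \<Longrightarrow> cmod (f2 x) \<le> B2"
    by (meson compact_imp_bounded bounded_iff imageI)
  have "compact (f0 ` cball 0 (m0 / 2))"
    using f0_holo cb by (intro compact_continuous_image holomorphic_on_imp_continuous_on) (auto elim: holomorphic_on_subset)
  then obtain B0 where B0: "\<And>x. x \<in> cball 0 (m0 / 2) \<Longrightarrow> cmod (f0 x) \<le> B0"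
    by (meson compact_imp_bounded bounded_iff imageI)
  define C where "C = 13 * S3 / (2 * m0)"
  have "cmod (H x) \<le> B2 + 12 * C + 6 * B0^2" if x: "0 < cmod x" "cmod x \<le> m0 / 2" for x
  proof -
    have xc: "x \<in> cball 0 (m0 / 2)" using x by simp
    have q: "cmod (f0 x / x^2) \<le> C"
    proof -
      have "cmod (f0 x) \<le> C * cmod x ^ 2" unfolding C_def by (rule f0_small[OF x(2)])
      then show ?thesis using x by (simp add: norm_divide norm_power field_simps)
    qed
    have "cmod (H x) \<le> cmod (f2 x) + cmod (12 * (f0 x / x^2)) + cmod (6 * (f0 x)^2)"
      unfolding H_near[OF x] by (meson norm_triangle_ineq4 order_trans add_mono order_refl)
    also have "\<dots> \<le> B2 + 12 * C + 6 * B0^2"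
    proof (intro add_mono)
      show "cmod (f2 x) \<le> B2" using B2[OF xc] .
      have "cmod (12 * (f0 x / x^2)) = 12 * cmod (f0 x / x^2)" by (simp only: norm_mult) simp
      then show "cmod (12 * (f0 x / x^2)) \<le> 12 * C" using q by simp
      have "cmod (f0 x) ^ 2 \<le> B0 ^ 2" using B0[OF xc] by (intro power_mono) auto
      then show "cmod (6 * (f0 x)^2) \<le> 6 * B0^2" by (simp add: norm_mult norm_power)
    qed
    finally show ?thesis .
  qed
  then show ?thesis by blast
qed

end


context ell begin

lemma coordD: "of_real D * s = of_real (- Im (cnj w2 * s)) * w1 + of_real (Im (cnj w1 * s)) * w2"
  unfolding D_def by (simp add: complex_eq_iff algebra_simps)

lemma coord: "s = of_real (- Im (cnj w2 * s) / D / 2) * (2 * w1) + of_real (Im (cnj w1 * s) / D / 2) * (2 * w2)"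
proof -
  define a where "a = - Im (cnj w2 * s) / D / 2"
  define b where "b = Im (cnj w1 * s) / D / 2"
  have D0: "D \<noteq> 0" using D_pos by simp
  have ea: "2 * D * a = - Im (cnj w2 * s)" unfolding a_def using D0 by simp
  have eb: "2 * D * b = Im (cnj w1 * s)" unfolding b_def using D0 by simp
  have "of_real D * (of_real a * (2 * w1) + of_real b * (2 * w2)) = of_real (2 * D * a) * w1 + of_real (2 * D * b) * w2"
    by (simp add: algebra_simps)
  also have "\<dots> = of_real D * s" unfolding ea eb coordD ..
  finally have "of_real D * (of_real a * (2 * w1) + of_real b * (2 * w2)) = of_real D * s" .
  then have "of_real a * (2 * w1) + of_real b * (2 * w2) = s" using D0 by simp
  then show ?thesis unfolding a_def b_def by simp
qed

definition Pi :: "complex set" where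
  "Pi = (\<lambda>(x, y). of_real x * (2 * w1) + of_real y * (2 * w2)) ` ({0..1} \<times> {0..1})"

lemma Pi_compact: "compact Pi"
  unfolding Pi_def
  by (intro compact_continuous_image compact_Times compact_Icc) (auto intro!: continuous_intros simp: case_prod_unfold)

lemma reduce: "\<exists>t m n. t \<in> Pi \<and> s = t + W m n"
proof -
  define a where "a = - Im (cnj w2 * s) / D / 2"
  define b where "b = Im (cnj w1 * s) / D / 2"
  have s: "s = of_real a * (2 * w1) + of_real b * (2 * w2)"
    using coord[of s] unfolding a_def b_def .
  define t where "t = of_real (a - of_int \<lfloor>a\<rfloor>) * (2 * w1) + of_real (b - of_int \<lfloor>b\<rfloor>) * (2 * w2)"
  have "t \<in> Pi" unfolding Pi_def t_def
    by (rule image_eqI[where x="(a - of_int \<lfloor>a\<rfloor>, b - of_int \<lfloor>b\<rfloor>)"]) (auto, linarith+)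
  moreover have "s = t + W \<lfloor>a\<rfloor> \<lfloor>b\<rfloor>" unfolding t_def W_def s by (simp add: algebra_simps)
  ultimately show ?thesis by blast
qed

definition U :: "complex set" where "U = (\<Union>p\<in>Lat. ball p (m0 / 2))"
definition K :: "complex set" where "K = Pi \<inter> (UNIV - U)"

lemma K_compact: "compact K"
  unfolding K_def U_def by (intro compact_Int_closed Pi_compact closed_Compl[unfolded Compl_eq_Diff_UNIV] open_UN) auto

lemma K_sub: "K \<subseteq> UNIV - Lat"
  unfolding K_def U_def using m0_pos by force

lemma H_bounded: "\<exists>B. \<forall>s. s \<notin> Lat \<longrightarrow> cmod (H s) \<le> B"
proof -
  have "compact (H ` K)"
    by (intro compact_continuous_image K_compact holomorphic_on_imp_continuous_on holomorphic_on_subset[OF H_holo K_sub])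
  then obtain BK where BK: "\<And>t. t \<in> K \<Longrightarrow> cmod (H t) \<le> BK"
    by (meson compact_imp_bounded bounded_iff imageI)
  obtain Bn where Bn: "\<And>x. 0 < cmod x \<Longrightarrow> cmod x \<le> m0 / 2 \<Longrightarrow> cmod (H x) \<le> Bn"
    using H_near_bound by blast
  have "cmod (H s) \<le> max BK Bn" if s: "s \<notin> Lat" for s
  proof -
    obtain t m n where t: "t \<in> Pi" "s = t + W m n" using reduce by blast
    have tL: "t \<notin> Lat" using s t L_add W_in by blast
    have Hs: "H s = H t" using H_periodic[OF tL W_in] t by simp
    show ?thesis
    proof (cases "t \<in> U")
      case False
      then have "t \<in> K" unfolding K_def using t by auto
      then show ?thesis using BK Hs by fastforce
    next
      case True
      then obtain p where p: "p \<in> Lat" "dist p t < m0 / 2" unfolding U_def by auto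
      define u where "u = t - p"
      have uL: "u \<notin> Lat" unfolding u_def using tL p L_add[of "t - p" p] by auto
      then have u0: "0 < cmod u" using L_zero by auto
      have u1: "cmod u \<le> m0 / 2" using p unfolding u_def by (simp add: dist_norm norm_minus_commute)
      have "H t = H u" using H_periodic[OF uL p(1)] unfolding u_def by simp
      then show ?thesis using Bn[OF u0 u1] Hs by simp
    qed
  qed
  then show ?thesis by blast
qed

lemma punct_notL: assumes "q \<in> Lat" "z \<noteq> q" "dist z q < m0" shows "z \<notin> Lat"
  using L_sep[of z q] assms by auto

lemma H_const: "\<exists>C. \<forall>s. s \<notin> Lat \<longrightarrow> H s = C"
proof -
  obtain B where B: "\<And>s. s \<notin> Lat \<Longrightarrow> cmod (H s) \<le> B" using H_bounded by blast
  have evB: "eventually (\<lambda>z. cmod (H z) \<le> B) (at q)" if q: "q \<in> Lat" for q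
    unfolding eventually_at using m0_pos punct_notL[OF q] B by (intro exI[of _ m0]) auto
  have ext: "\<exists>g. g holomorphic_on ball q m0 \<and> (\<forall>z\<in>ball q m0 - {q}. g z = H z)" if q: "q \<in> Lat" for q
  proof (subst holomorphic_on_extend_bounded)
    show "H holomorphic_on ball q m0 - {q}"
      by (rule holomorphic_on_subset[OF H_holo]) (use punct_notL[OF q] in \<open>auto simp: dist_commute\<close>)
    show "q \<in> interior (ball q m0)" using m0_pos by simp
    show "\<exists>B. \<forall>\<^sub>F z in at q. cmod (H z) \<le> B" using evB[OF q] by blast
  qed
  define Hx where "Hx s = (if s \<in> Lat then Lim (at s) H else H s)" for s
  have loc: "\<exists>g. g holomorphic_on ball q m0 \<and> (\<forall>z\<in>ball q m0. g z = Hx z) \<and> (H \<longlongrightarrow> Hx q) (at q)"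
    if q: "q \<in> Lat" for q
  proof -
    obtain g where g: "g holomorphic_on ball q m0" "\<forall>z\<in>ball q m0 - {q}. g z = H z" using ext[OF q] by blast
    have "g field_differentiable (at q)"
      using holomorphic_on_imp_differentiable_at[OF g(1) open_ball] m0_pos by simp
    then have "isCont g q" by (rule field_differentiable_imp_continuous_at)
    then have "(g \<longlongrightarrow> g q) (at q)" by (simp add: isCont_def)
    moreover have "eventually (\<lambda>z. g z = H z) (at q)"
      unfolding eventually_at using m0_pos g(2) by (intro exI[of _ m0]) (auto simp: dist_commute)
    ultimately have lim: "(H \<longlongrightarrow> g q) (at q)" by (rule Lim_transform_eventually)
    then have "Hx q = g q" unfolding Hx_def using q by (simp add: tendsto_Lim)
    moreover have "g z = Hx z" if "z \<in> ball q m0" "z \<noteq> q" for z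
      using g(2) that punct_notL[OF q, of z] unfolding Hx_def by (auto simp: dist_commute)
    ultimately show ?thesis using g(1) lim by (metis)
  qed
  have holo: "Hx holomorphic_on UNIV"
  proof (subst holomorphic_on_open)
    show "\<forall>x\<in>UNIV. \<exists>f'. (Hx has_field_derivative f') (at x)"
    proof
      fix x :: complex
      show "\<exists>f'. (Hx has_field_derivative f') (at x)"
      proof (cases "x \<in> Lat")
        case True
        obtain g where g: "g holomorphic_on ball x m0" "\<forall>z\<in>ball x m0. g z = Hx z" using loc[OF True] by blast
        have "g field_differentiable (at x)" using g(1) m0_pos by (intro holomorphic_on_imp_differentiable_at) auto
        then obtain f' where "(g has_field_derivative f') (at x)" by (auto simp: field_differentiable_def)
        then have "(Hx has_field_derivative f') (at x)"
          by (rule has_field_derivative_transform_within_open[where S="ball x m0"]) (use g m0_pos in auto)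
        then show ?thesis by blast
      next
        case False
        have "H field_differentiable (at x)" using False by (intro holomorphic_on_imp_differentiable_at[OF H_holo notL_open]) auto
        then obtain f' where "(H has_field_derivative f') (at x)" by (auto simp: field_differentiable_def)
        then have "(Hx has_field_derivative f') (at x)"
          by (rule has_field_derivative_transform_within_open[where S="UNIV - Lat"]) (use False notL_open in \<open>auto simp: Hx_def\<close>)
        then show ?thesis by blast
      qed
    qed
  qed simp
  have bnd: "cmod (Hx s) \<le> B" for s
  proof (cases "s \<in> Lat")
    case True
    obtain g where "(H \<longlongrightarrow> Hx s) (at s)" using loc[OF True] by blast
    then show ?thesis by (rule Lim_norm_ubound[OF trivial_limit_at _ evB[OF True]])
  next
    case False then show ?thesis using B unfolding Hx_def by simp
  qed
  have "bounded (range Hx)" using bnd by (auto simp: bounded_iff)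
  then have "Hx constant_on UNIV" using holo Liouville_theorem by blast
  then obtain C where "\<And>s. Hx s = C" by (auto simp: constant_on_def)
  then show ?thesis unfolding Hx_def by (metis)
qed

end


context ell begin

definition Cc :: complex where "Cc = (SOME C. \<forall>s. s \<notin> Lat \<longrightarrow> H s = C)"

lemma ode2: "s \<notin> Lat \<Longrightarrow> P2 s = 6 * (wp w1 w2 s)^2 + Cc"
proof -
  assume s: "s \<notin> Lat"
  have "\<forall>s. s \<notin> Lat \<longrightarrow> H s = Cc" unfolding Cc_def using H_const by (rule someI_ex)
  then have e: "P2 s - 6 * (wp w1 w2 s)^2 = Cc" using s unfolding H_def by auto
  then show ?thesis by (simp add: diff_eq_eq add.commute)
qed

lemma ode1: "\<exists>K0. \<forall>s. s \<notin> Lat \<longrightarrow> (P1 s)^2 = 4 * (wp w1 w2 s)^3 + 2 * Cc * wp w1 w2 s + K0"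
proof -
  define E where "E s = (P1 s)^2 - 4 * (wp w1 w2 s)^3 - 2 * Cc * wp w1 w2 s" for s
  have dE: "(E has_field_derivative 0) (at x)" if x: "x \<in> UNIV - Lat" for x
  proof -
    have wpd: "(wp w1 w2 has_field_derivative P1 x) (at x)" using wp_deriv x by auto
    have p1d: "(P1 has_field_derivative P2 x) (at x)" using P1_deriv x by auto
    have "(E has_field_derivative (2 * P1 x * P2 x - 4 * (3 * (wp w1 w2 x)^2 * P1 x) - 2 * Cc * P1 x)) (at x)"
      unfolding E_def by (auto intro!: derivative_eq_intros wpd p1d simp: power2_eq_square)
    moreover have "2 * P1 x * P2 x - 4 * (3 * (wp w1 w2 x)^2 * P1 x) - 2 * Cc * P1 x = 0"
      using ode2[of x] x by (simp add: algebra_simps power2_eq_square)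
    ultimately show ?thesis by simp
  qed
  have "continuous_on (UNIV - Lat) E"
    using dE by (intro continuous_at_imp_continuous_on) (auto intro: DERIV_isCont)
  then obtain c where "\<And>x. x \<in> UNIV - Lat \<Longrightarrow> E x = c"
    using DERIV_zero_connected_constant[OF notL_conn notL_open, of "{}" E] dE by auto
  then show ?thesis unfolding E_def by (intro exI[of _ c]) (auto simp: algebra_simps)
qed

inductive gen :: "(complex \<Rightarrow> complex) \<Rightarrow> bool" where
  gconst: "gen (\<lambda>s. c)"
| gwp: "gen (wp w1 w2)"
| gp1: "gen P1"
| gadd: "gen f \<Longrightarrow> gen g \<Longrightarrow> gen (\<lambda>s. f s + g s)"
| gmult: "gen f \<Longrightarrow> gen g \<Longrightarrow> gen (\<lambda>s. f s * g s)"

lemma gen_deriv: "gen f \<Longrightarrow> \<exists>g. gen g \<and> (\<forall>x\<in>UNIV - Lat. (f has_field_derivative g x) (at x))"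
proof (induction rule: gen.induct)
  case (gconst c)
  then show ?case by (intro exI[of _ "\<lambda>s. 0"]) (auto intro: gen.intros)
next
  case gwp
  then show ?case using wp_deriv by (intro exI[of _ P1]) (auto intro: gen.intros)
next
  case gp1
  have "gen (\<lambda>s. (\<lambda>s. 6) s * ((\<lambda>s. wp w1 w2 s * wp w1 w2 s) s) + (\<lambda>s. Cc) s)"
    by (intro gen.intros)
  moreover have "(P1 has_field_derivative 6 * (wp w1 w2 x * wp w1 w2 x) + Cc) (at x)" if "x \<in> UNIV - Lat" for x
    using P1_deriv[of x] ode2[of x] that by (simp add: power2_eq_square)
  ultimately show ?case by (intro exI[of _ "\<lambda>s. 6 * (wp w1 w2 s * wp w1 w2 s) + Cc"]) auto
next
  case (gadd f g)
  then obtain f' g' where f': "gen f'" "\<forall>x\<in>UNIV - Lat. (f has_field_derivative f' x) (at x)"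
    and g': "gen g'" "\<forall>x\<in>UNIV - Lat. (g has_field_derivative g' x) (at x)" by blast
  show ?case using f' g' by (intro exI[of _ "\<lambda>s. f' s + g' s"]) (auto intro: gen.intros DERIV_add)
next
  case (gmult f g)
  then obtain f' g' where f': "gen f'" "\<forall>x\<in>UNIV - Lat. (f has_field_derivative f' x) (at x)"
    and g': "gen g'" "\<forall>x\<in>UNIV - Lat. (g has_field_derivative g' x) (at x)" by blast
  have "gen (\<lambda>s. f' s * g s + g' s * f s)" using f' g' gmult.hyps by (intro gen.intros)
  moreover have "((\<lambda>s. f s * g s) has_field_derivative f' x * g x + g' x * f x) (at x)" if "x \<in> UNIV - Lat" for x
    using f' g' that by (intro DERIV_mult) auto
  ultimately show ?case by (intro exI[of _ "\<lambda>s. f' s * g s + g' s * f s"]) auto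
qed

lemma gen_eq: "gen f \<Longrightarrow> wp w1 w2 a = wp w1 w2 b \<Longrightarrow> P1 a = P1 b \<Longrightarrow> f a = f b"
  by (induction rule: gen.induct) auto

lemma derivs_gen: "\<exists>f. gen f \<and> (\<forall>x\<in>UNIV - Lat. (deriv ^^ n) (wp w1 w2) x = f x)"
proof (induction n)
  case 0
  then show ?case by (intro exI[of _ "wp w1 w2"]) (auto intro: gen.intros)
next
  case (Suc n)
  then obtain f where f: "gen f" "\<forall>x\<in>UNIV - Lat. (deriv ^^ n) (wp w1 w2) x = f x" by blast
  obtain g where g: "gen g" "\<forall>x\<in>UNIV - Lat. (f has_field_derivative g x) (at x)" using gen_deriv[OF f(1)] by blast
  have "(deriv ^^ Suc n) (wp w1 w2) x = g x" if x: "x \<in> UNIV - Lat" for x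
  proof -
    have ev: "eventually (\<lambda>t. (deriv ^^ n) (wp w1 w2) t = f t) (nhds x)"
      using notL_open x f(2) by (intro eventually_nhds_in_open[THEN eventually_mono]) auto
    have "(deriv ^^ Suc n) (wp w1 w2) x = deriv ((deriv ^^ n) (wp w1 w2)) x" by simp
    also have "\<dots> = deriv f x" by (rule deriv_cong_ev[OF ev refl])
    also have "\<dots> = g x" using g(2) x by (intro DERIV_imp_deriv) auto
    finally show ?thesis .
  qed
  then show ?case using g(1) by blast
qed

lemma derivs_eq: assumes "a \<notin> Lat" "b \<notin> Lat" "wp w1 w2 a = wp w1 w2 b" "P1 a = P1 b"
  shows "(deriv ^^ n) (wp w1 w2) a = (deriv ^^ n) (wp w1 w2) b"
proof -
  obtain f where f: "gen f" "\<forall>x\<in>UNIV - Lat. (deriv ^^ n) (wp w1 w2) x = f x" using derivs_gen by blast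
  then show ?thesis using gen_eq[OF f(1) assms(3,4)] assms(1,2) by auto
qed

lemma neg_bij_L: "bij_betw uminus Lat Lat"
proof (rule bij_betwI[where g="uminus"])
  show "uminus \<in> Lat \<rightarrow> Lat" using L_minus by auto
qed (use L_minus in auto)

lemma P1_odd: "P1 (- s) = - P1 s"
proof -
  have "infsum (\<lambda>v. (\<lambda>w. -2 / (- s - w)^3) (- v)) Lat = infsum (\<lambda>w. -2 / (- s - w)^3) Lat"
    by (rule infsum_reindex_bij_betw[OF neg_bij_L])
  moreover have "(\<lambda>v. (\<lambda>w. -2 / (- s - w)^3) (- v)) = (\<lambda>v. - (-2 / (s - v)^3))"
  proof
    fix v
    have "(- s - - v) = - (s - v)" by simp
    then have "(- s - - v)^3 = (- (s - v))^3" by (simp only:)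
    also have "\<dots> = - ((s - v)^3)" by (rule power_minus_odd) simp
    finally have "(- s - - v)^3 = - ((s - v)^3)" .
    then show "(\<lambda>w. -2 / (- s - w)^3) (- v) = - (-2 / (s - v)^3)" by simp
  qed
  ultimately have "P1 (- s) = infsum (\<lambda>v. - (-2 / (s - v)^3)) Lat" unfolding P1_def by simp
  also have "\<dots> = - P1 s" unfolding P1_def by (rule infsum_uminus)
  finally show ?thesis .
qed

end


lemma derivs_shift: "(deriv ^^ n) (\<lambda>t. f (t + p)) = (\<lambda>t. (deriv ^^ n) f (t + p))"
proof (induction n)
  case 0 then show ?case by simp
next
  case (Suc n)
  show ?case by (rule ext) (simp add: Suc deriv_shift_gen)
qed

context ell begin

lemma no_shift:
  assumes a: "a \<notin> Lat" and b: "b \<notin> Lat" and ba: "b - a \<notin> Lat"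
    and d: "\<And>n. (deriv ^^ n) (wp w1 w2) a = (deriv ^^ n) (wp w1 w2) b"
  shows False
proof -
  define D where "D = {s. s + a \<notin> Lat \<and> s + b \<notin> Lat}"
  define T where "T = (\<lambda>x. x - a) ` Lat \<union> (\<lambda>x. x - b) ` Lat"
  have img: "s \<in> (\<lambda>x. x - c) ` A \<longleftrightarrow> s + c \<in> A" for s c :: complex and A
  proof
    assume "s \<in> (\<lambda>x. x - c) ` A"
    then obtain x where "x \<in> A" "s = x - c" by auto
    then show "s + c \<in> A" by simp
  next
    assume "s + c \<in> A"
    then show "s \<in> (\<lambda>x. x - c) ` A" by (rule rev_image_eqI) simp
  qed
  have DT: "D = UNIV - T" unfolding D_def T_def by (auto simp: img)
  have Tc: "countable T" unfolding T_def using L_countable by auto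
  have Dopen: "open D"
  proof -
    have "D = (\<lambda>s. s + a) -` (UNIV - Lat) \<inter> (\<lambda>s. s + b) -` (UNIV - Lat)" unfolding D_def by auto
    moreover have "open ((\<lambda>s. s + c) -` (UNIV - Lat))" for c :: complex
      by (intro continuous_open_vimage notL_open) (auto intro!: continuous_intros)
    ultimately show ?thesis by (metis open_Int)
  qed
  have Dconn: "connected D" unfolding DT by (rule connected_open_diff_countable) (use Tc in auto)
  have D0: "0 \<in> D" unfolding D_def using a b by simp
  have h1: "(\<lambda>s. wp w1 w2 (s + a)) holomorphic_on D"
  proof -
    have "(wp w1 w2 \<circ> (\<lambda>s. s + a)) holomorphic_on D"
      by (rule holomorphic_on_compose_gen[OF _ wp_holo]) (auto intro!: holomorphic_intros simp: D_def)
    then show ?thesis by (simp add: o_def)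
  qed
  have h2: "(\<lambda>s. wp w1 w2 (s + b)) holomorphic_on D"
  proof -
    have "(wp w1 w2 \<circ> (\<lambda>s. s + b)) holomorphic_on D"
      by (rule holomorphic_on_compose_gen[OF _ wp_holo]) (auto intro!: holomorphic_intros simp: D_def)
    then show ?thesis by (simp add: o_def)
  qed
  have eqD: "wp w1 w2 (s + a) = wp w1 w2 (s + b)" if "s \<in> D" for s
    by (rule holomorphic_fun_eq_on_connected[OF h1 h2 Dopen Dconn _ D0 that]) (simp add: derivs_shift d)
  obtain r where r: "r > 0" "ball (b - a) r \<subseteq> UNIV - Lat" using notL_open ba open_contains_ball by blast
  have ev: "eventually (\<lambda>u. wp w1 w2 (u + (b - a)) = wp w1 w2 u) (at 0)"
  proof -
    have "wp w1 w2 (u + (b - a)) = wp w1 w2 u" if u: "u \<noteq> 0" "dist u 0 < min m0 r" for u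
    proof -
      have "u \<notin> Lat" using punct_notL[OF L_zero u(1)] u(2) by simp
      moreover have "u + (b - a) \<in> ball (b - a) r" using u(2) by (simp add: dist_norm)
      then have "u + (b - a) \<notin> Lat" using r by auto
      moreover have "u - a + b = u + (b - a)" by simp
      ultimately have "u - a + b \<notin> Lat" by metis
      moreover have "u - a + a \<notin> Lat" using \<open>u \<notin> Lat\<close> by simp
      ultimately have "u - a \<in> D" unfolding D_def by blast
      then show ?thesis using eqD[of "u - a"] by (simp add: algebra_simps)
    qed
    then show ?thesis unfolding eventually_at using r m0_pos by (intro exI[of _ "min m0 r"]) auto
  qed
  have "isCont (\<lambda>u. wp w1 w2 (u + (b - a))) 0"
  proof -
    have "(wp w1 w2 has_field_derivative P1 (0 + (b - a))) (at (0 + (b - a)))" using wp_deriv ba by simp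
    then have "((\<lambda>u. wp w1 w2 (u + (b - a))) has_field_derivative P1 (0 + (b - a))) (at 0)"
      by (simp only: DERIV_shift)
    then show ?thesis by (rule DERIV_isCont)
  qed
  then have "((\<lambda>u. wp w1 w2 (u + (b - a))) \<longlongrightarrow> wp w1 w2 (b - a)) (at 0)"
    by (simp add: isCont_def)
  then have lw: "(wp w1 w2 \<longlongrightarrow> wp w1 w2 (b - a)) (at 0)" using ev by (rule Lim_transform_eventually)
  have "((\<lambda>u. u^2 * wp w1 w2 u) \<longlongrightarrow> 0^2 * wp w1 w2 (b - a)) (at 0)"
    by (intro tendsto_intros lw)
  then have l0: "((\<lambda>u. u^2 * wp w1 w2 u) \<longlongrightarrow> 0) (at 0)" by simp
  have "isCont f0 0"
  proof -
    have "0 \<in> S0" using L_zero by auto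
    then show ?thesis using f0_deriv DERIV_isCont by blast
  qed
  then have "((\<lambda>u. 1 + u^2 * f0 u) \<longlongrightarrow> 1 + 0^2 * f0 0) (at 0)"
    by (intro tendsto_intros) (simp add: isCont_def)
  then have l1': "((\<lambda>u. 1 + u^2 * f0 u) \<longlongrightarrow> 1) (at 0)" by simp
  have "eventually (\<lambda>u. 1 + u^2 * f0 u = u^2 * wp w1 w2 u) (at 0)"
    unfolding eventually_at by (intro exI[of _ 1]) (auto simp: wp_eq field_simps)
  then have l1: "((\<lambda>u. u^2 * wp w1 w2 u) \<longlongrightarrow> 1) (at 0)" using l1' by (rule Lim_transform_eventually[rotated])
  have "(0::complex) = 1" using tendsto_unique[OF _ l0 l1] by simp
  then show False by simp
qed

lemma wp_eq_derivs:
  assumes a: "a \<notin> Lat" and b: "b \<notin> Lat" and ab: "a + b \<notin> Lat" and e: "wp w1 w2 a = wp w1 w2 b"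
  shows "(deriv ^^ n) (wp w1 w2) a = (deriv ^^ n) (wp w1 w2) b"
proof -
  obtain K0 where K0: "\<And>s. s \<notin> Lat \<Longrightarrow> (P1 s)^2 = 4 * (wp w1 w2 s)^3 + 2 * Cc * wp w1 w2 s + K0"
    using ode1 by blast
  have "(P1 a)^2 = (P1 b)^2" using K0[OF a] K0[OF b] e by simp
  then have "(P1 a - P1 b) * (P1 a + P1 b) = 0" by (simp add: power2_eq_square algebra_simps)
  then have "P1 a = P1 b \<or> P1 a = - P1 b" by (auto simp: add_eq_0_iff)
  then show ?thesis
  proof
    assume "P1 a = P1 b" then show ?thesis using derivs_eq a b e by blast
  next
    assume p: "P1 a = - P1 b"
    have b': "- b \<notin> Lat" using b L_minus by fastforce
    have "wp w1 w2 a = wp w1 w2 (- b)" using e wp_even by simp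
    moreover have "P1 a = P1 (- b)" using p P1_odd by simp
    ultimately have "\<And>n. (deriv ^^ n) (wp w1 w2) a = (deriv ^^ n) (wp w1 w2) (- b)"
      using derivs_eq[OF a b'] by blast
    moreover have "- b - a \<notin> Lat" using ab L_minus by (metis minus_diff_eq diff_minus_eq_add add.commute)
    ultimately have False using no_shift[OF a b'] by blast
    then show ?thesis ..
  qed
qed

end


lemma esym_0: "esym N x 0 = 1"
proof -
  have E: "{I. I \<subseteq> {1..N} \<and> card I = 0} = {{}}"
  proof (intro equalityI subsetI)
    fix I assume "I \<in> {I. I \<subseteq> {1..N} \<and> card I = 0}"
    then have "I \<subseteq> {1..N}" "card I = 0" by auto
    moreover then have "finite I" using finite_subset by blast
    ultimately show "I \<in> {{}}" by simp
  qed auto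
  show ?thesis unfolding esym_def E by simp
qed

lemma esym_big: "r > N \<Longrightarrow> esym N x r = 0"
proof -
  assume r: "r > N"
  have E: "{I. I \<subseteq> {1..N} \<and> card I = r} = {}"
  proof (rule ccontr)
    assume "{I. I \<subseteq> {1..N} \<and> card I = r} \<noteq> {}"
    then obtain I where "I \<subseteq> {1..N}" "card I = r" by blast
    then have "r \<le> N" using card_mono[of "{1..N}" I] by simp
    then show False using r by simp
  qed
  show ?thesis unfolding esym_def E by simp
qed

lemma prod_monom0: "finite B \<Longrightarrow> (\<Prod>i\<in>B. monom (f i) 0) = monom (\<Prod>i\<in>B. f i) 0"
  by (induction B rule: finite_induct) (auto simp: mult_monom)

lemma vieta: "coeff (\<Prod>i\<in>{1..N}. [:- x i, 1:]) t = (if t \<le> N then (-1)^(N - t) * esym N x (N - t) else 0)"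
proof -
  define S where "S = {1..N}"
  have fS: "finite S" unfolding S_def by simp
  have lin: "[:- x i, 1:] = monom (- x i) 0 + monom 1 1" for i
    by (simp add: monom_0 monom_Suc)
  have "(\<Prod>i\<in>S. [:- x i, 1:]) = (\<Prod>i\<in>S. monom (- x i) 0 + monom 1 1)" unfolding lin ..
  also have "\<dots> = (\<Sum>B\<in>Pow S. (\<Prod>i\<in>B. monom (- x i) 0) * (\<Prod>i\<in>S - B. monom 1 1))"
    by (rule prod_add[OF fS])
  also have "\<dots> = (\<Sum>B\<in>Pow S. monom (\<Prod>i\<in>B. - x i) (card (S - B)))"
  proof (rule sum.cong[OF refl])
    fix B assume "B \<in> Pow S"
    then have fB: "finite B" using fS finite_subset by auto
    have "(\<Prod>i\<in>S - B. monom (1::complex) 1) = monom 1 1 ^ card (S - B)" by simp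
    also have "\<dots> = monom 1 (card (S - B))" by (simp add: monom_altdef)
    finally show "(\<Prod>i\<in>B. monom (- x i) 0) * (\<Prod>i\<in>S - B. monom 1 1) = monom (\<Prod>i\<in>B. - x i) (card (S - B))"
      using prod_monom0[OF fB, of "\<lambda>i. - x i"] by (simp add: mult_monom)
  qed
  finally have eq: "(\<Prod>i\<in>S. [:- x i, 1:]) = (\<Sum>B\<in>Pow S. monom (\<Prod>i\<in>B. - x i) (card (S - B)))" .
  have "coeff (\<Prod>i\<in>S. [:- x i, 1:]) t = (\<Sum>B\<in>Pow S. if card (S - B) = t then (\<Prod>i\<in>B. - x i) else 0)"
    unfolding eq coeff_sum by simp
  also have "\<dots> = (\<Sum>B\<in>{B \<in> Pow S. card (S - B) = t}. (\<Prod>i\<in>B. - x i))"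
    by (rule sum.inter_filter[symmetric]) (use fS in simp)
  also have "\<dots> = (if t \<le> N then (-1)^(N - t) * esym N x (N - t) else 0)"
  proof (cases "t \<le> N")
    case True
    have cS: "card S = N" unfolding S_def by simp
    have set: "{B \<in> Pow S. card (S - B) = t} = {I. I \<subseteq> {1..N} \<and> card I = N - t}"
    proof -
      have "card (S - B) = N - card B" if "B \<subseteq> S" for B
        using that fS cS by (simp add: card_Diff_subset finite_subset)
      moreover have "card B \<le> N" if "B \<subseteq> S" for B using that fS cS card_mono by metis
      ultimately show ?thesis using True unfolding S_def by auto
    qed
    have "(\<Sum>B\<in>{B \<in> Pow S. card (S - B) = t}. (\<Prod>i\<in>B. - x i))
        = (\<Sum>B\<in>{I. I \<subseteq> {1..N} \<and> card I = N - t}. (-1)^(N - t) * (\<Prod>i\<in>B. x i))"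
      unfolding set by (rule sum.cong[OF refl]) (simp add: prod_uminus)
    also have "\<dots> = (-1)^(N - t) * esym N x (N - t)" unfolding esym_def by (simp add: sum_distrib_left)
    finally show ?thesis using True by simp
  next
    case False
    have E: "{B \<in> Pow S. card (S - B) = t} = {}"
    proof -
      have "card (S - B) \<le> N" for B unfolding S_def
        by (metis card_atLeastAtMost card_mono diff_le_self finite_atLeastAtMost Diff_subset diff_Suc_1)
      then show ?thesis using False by auto
    qed
    show ?thesis unfolding E using False by simp
  qed
  finally show ?thesis unfolding S_def .
qed

lemma roots_dvd: "finite R \<Longrightarrow> (\<forall>y\<in>R. poly p y = 0) \<Longrightarrow> (\<Prod>y\<in>R. [:- y, 1:]) dvd (p :: complex poly)"
proof (induction R arbitrary: p rule: finite_induct)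
  case empty then show ?case by simp
next
  case (insert y R)
  then have "[:- y, 1:] dvd p" by (simp add: poly_eq_0_iff_dvd)
  then obtain q where q: "p = [:- y, 1:] * q" by (elim dvdE)
  have "\<forall>u\<in>R. poly q u = 0"
  proof
    fix u assume u: "u \<in> R"
    then have "u \<noteq> y" using insert by auto
    moreover have "poly p u = 0" using insert u by auto
    ultimately show "poly q u = 0" using q by simp
  qed
  then have "(\<Prod>y\<in>R. [:- y, 1:]) dvd q" using insert by blast
  moreover have e: "(\<Prod>y\<in>insert y R. [:- y, 1:]) = [:- y, 1:] * (\<Prod>y\<in>R. [:- y, 1:])"
    by (rule prod.insert[OF insert.hyps(1,2)])
  ultimately show ?case unfolding e q by (intro mult_dvd_mono dvd_refl)
qed

lemma deg1: "degree (c :: complex poly) \<le> 1 \<Longrightarrow> c = [:coeff c 0, coeff c 1:]"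
  by (rule poly_eqI) (auto simp: coeff_pCons coeff_eq_0 split: nat.split)


lemma neg1_sq: "(-1::complex)^n * (-1)^n = 1"
  by (simp add: power_mult_distrib[symmetric])

lemma alg_main:
  fixes x mu :: "nat \<Rightarrow> complex" and l r1 r2 :: nat
  assumes inj: "inj_on x {1..l}"
    and roots: "\<forall>j\<in>{1..l}. (\<Sum>r=0..l+1. mu r * x j ^ r) = 0"
    and r1: "r1 \<in> {1..l+1}" and r2: "r2 \<in> {1..l+1}"
  shows "(-1) ^ r1 * esym l x (r2 - 1) * mu (l + 1 - r1) - (-1) ^ r2 * esym l x (r1 - 1) * mu (l + 1 - r2)
       = (esym l x r1 * esym l x (r2 - 1) - esym l x r2 * esym l x (r1 - 1)) * mu (l + 1)"
proof -
  define p where "p = (\<Sum>r\<le>l+1. monom (mu r) r)"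
  have cp: "t \<le> l+1 \<Longrightarrow> coeff p t = mu t" for t unfolding p_def by (rule coeff_sum_monom)
  have cp2: "t > l+1 \<Longrightarrow> coeff p t = 0" for t unfolding p_def coeff_sum by simp
  have pp: "poly p y = (\<Sum>r=0..l+1. mu r * y ^ r)" for y
    unfolding p_def poly_sum poly_monom by (simp add: atLeast0AtMost)
  define Q where "Q = (\<Prod>i\<in>{1..l}. [:- x i, 1:])"
  have Qeq: "Q = (\<Prod>y\<in>x ` {1..l}. [:- y, 1:])"
    unfolding Q_def using prod.reindex[OF inj, of "\<lambda>y. [:- y, 1:]"] by (simp add: o_def)
  have "(\<Prod>y\<in>x ` {1..l}. [:- y, 1:]) dvd p"
    by (rule roots_dvd) (use roots pp in auto)
  then obtain c where pc: "p = Q * c" unfolding Qeq[symmetric] by (elim dvdE)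
  define S where "S = esym l x"
  have cQ: "coeff Q t = (if t \<le> l then (-1)^(l-t) * S (l-t) else 0)" for t
    unfolding Q_def S_def by (rule vieta)
  have Ql: "coeff Q l = 1" using cQ[of l] esym_0 unfolding S_def by simp
  then have Q0: "Q \<noteq> 0" by auto
  have dQ: "degree Q = l"
  proof (rule antisym)
    show "degree Q \<le> l" by (rule degree_le) (simp add: cQ)
    show "l \<le> degree Q" using Ql by (intro le_degree) simp
  qed
  have dp: "degree p \<le> l + 1" by (rule degree_le) (simp add: cp2)
  have dc: "degree c \<le> 1"
  proof (cases "c = 0")
    case True then show ?thesis by simp
  next
    case False
    then have "degree p = l + degree c" using pc dQ Q0 by (simp add: degree_mult_eq)
    then show ?thesis using dp by simp
  qed
  define a where "a = coeff c 1"
  define b where "b = coeff c 0"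
  have ceq: "c = [:b, a:]" unfolding a_def b_def by (rule deg1[OF dc])
  have pcoef: "coeff p t = b * coeff Q t + (case t of 0 \<Rightarrow> 0 | Suc t' \<Rightarrow> a * coeff Q t')" for t
  proof -
    have "p = Polynomial.smult b Q + pCons 0 (Polynomial.smult a Q)" unfolding pc ceq by (simp add: mult.commute)
    then show ?thesis by (simp add: coeff_pCons split: nat.split)
  qed
  have key: "(-1)^r * mu (l+1-r) = a * S r - b * S (r - 1)" if r: "r \<in> {1..l+1}" for r
  proof (cases "r = l + 1")
    case True
    have "mu 0 = b * ((-1)^l * S l)" using cp[of 0] pcoef[of 0] cQ[of 0] by simp
    moreover have "S (l + 1) = 0" unfolding S_def by (rule esym_big) simp
    ultimately show ?thesis using True neg1_sq[of l] by (simp add: algebra_simps)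
  next
    case False
    then have rl: "r \<le> l" "1 \<le> r" using r by auto
    then obtain r' where r': "r = Suc r'" by (cases r) auto
    have t: "l + 1 - r = Suc (l - r)" using rl by simp
    have "mu (l+1-r) = coeff p (Suc (l - r))" using cp[of "l+1-r"] t by simp
    also have "\<dots> = b * coeff Q (Suc (l - r)) + a * coeff Q (l - r)" by (simp add: pcoef)
    also have "\<dots> = b * ((-1)^r' * S r') + a * ((-1)^r * S r)"
    proof -
      have "l - Suc (l - r) = r'" using rl r' by simp
      moreover have "l - (l - r) = r" using rl by simp
      ultimately show ?thesis using rl by (simp add: cQ)
    qed
    finally have "(-1)^r * mu (l+1-r) = (-1)^r * (b * ((-1)^r' * S r') + a * ((-1)^r * S r))" by simp
    also have "\<dots> = a * S r - b * S r'"
      using neg1_sq[of r] neg1_sq[of r'] unfolding r' by (simp add: algebra_simps)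
    finally show ?thesis using r' by simp
  qed
  have mul: "mu (l + 1) = a"
  proof -
    have "mu (l + 1) = coeff p (Suc l)" using cp[of "l+1"] by simp
    also have "\<dots> = a" using Ql cQ[of "Suc l"] by (simp add: pcoef)
    finally show ?thesis .
  qed
  have "(-1) ^ r1 * esym l x (r2 - 1) * mu (l + 1 - r1) - (-1) ^ r2 * esym l x (r1 - 1) * mu (l + 1 - r2)
      = ((-1) ^ r1 * mu (l + 1 - r1)) * S (r2 - 1) - ((-1) ^ r2 * mu (l + 1 - r2)) * S (r1 - 1)"
    unfolding S_def by (simp add: algebra_simps)
  also have "\<dots> = (a * S r1 - b * S (r1 - 1)) * S (r2 - 1) - (a * S r2 - b * S (r2 - 1)) * S (r1 - 1)"
    using key[OF r1] key[OF r2] by simp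
  also have "\<dots> = (S r1 * S (r2 - 1) - S r2 * S (r1 - 1)) * a" by (simp add: algebra_simps)
  finally show ?thesis unfolding mul S_def .
qed


lemma sum_split_pred: "finite A \<Longrightarrow> sum f A = sum f {i\<in>A. P i} + sum f {i\<in>A. \<not> P i}"
proof -
  assume fA: "finite A"
  have "A = {i\<in>A. P i} \<union> {i\<in>A. \<not> P i}" by auto
  then have "sum f A = sum f ({i\<in>A. P i} \<union> {i\<in>A. \<not> P i})" by simp
  also have "\<dots> = sum f {i\<in>A. P i} + sum f {i\<in>A. \<not> P i}"
    by (rule sum.union_disjoint) (use fA in auto)
  finally show ?thesis .
qed

theorem mainTheorem6:
  fixes w1 w2 :: complex and m l :: nat and n k :: "nat \<Rightarrow> int"
    and gam lam z :: "nat \<Rightarrow> complex" and mu :: "nat \<Rightarrow> complex"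
    and r1 r2 :: nat
  assumes tau: "Im (w2 / w1) > 0"
    and m_pos: "m \<ge> 1" and l_pos: "l \<ge> 1"
    and n_range: "\<forall>i\<in>{1..m}. n i \<ge> 0 \<or> n i = -2" and n_inj: "inj_on n {1..m}"
    and k_range: "\<forall>i\<in>{1..l}. k i \<ge> 0 \<or> k i = -2" and k_inj: "inj_on k {1..l}"
    and l_def: "int l = max (Max (n ` {1..m})) (Max (k ` {1..l})) + 1"
    and z_off: "\<forall>i\<in>{1..l}. z i \<notin> lattice w1 w2"
    and det_nz: "det (mat l l (\<lambda>(i, j). wpd w1 w2 (k (Suc j)) (z (Suc i)))) \<noteq> 0"
    and lam_eq: "\<forall>j\<in>{1..l}. (\<Sum>i=1..m. gam i * wpd w1 w2 (n i) (z j))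
                            = (\<Sum>i=1..l. lam i * wpd w1 w2 (k i) (z j))"
    and zsum: "(\<Sum>i=1..l. z i) \<notin> lattice w1 w2"
    and pole: "is_pole (psi w1 w2 m n gam l k lam) 0"
    and pole_order: "zorder (psi w1 w2 m n gam l k lam) 0 = - int (l + 1)"
    and mu_def: "\<forall>s. s \<notin> lattice w1 w2 \<longrightarrow>
                   phi w1 w2 m n gam l k lam s = (\<Sum>r=0..l+1. mu r * wp w1 w2 s ^ r)"
    and phi_nz: "\<exists>s. s \<notin> lattice w1 w2 \<and> phi w1 w2 m n gam l k lam s \<noteq> 0"
    and z_not_pm: "\<forall>i\<in>{1..l}. (\<Sum>j=1..l. z j) - z i \<notin> lattice w1 w2
                              \<and> (\<Sum>j=1..l. z j) + z i \<notin> lattice w1 w2"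
    and z_pair: "\<forall>i\<in>{1..l}. \<forall>j\<in>{1..l}. i \<noteq> j \<longrightarrow> z i + z j \<notin> lattice w1 w2"
    and r1: "r1 \<in> {1..l+1}" and r2: "r2 \<in> {1..l+1}"
  shows "(-1) ^ r1 * esym l (\<lambda>i. wp w1 w2 (z i)) (r2 - 1) * mu (l + 1 - r1)
         - (-1) ^ r2 * esym l (\<lambda>i. wp w1 w2 (z i)) (r1 - 1) * mu (l + 1 - r2)
       = (esym l (\<lambda>i. wp w1 w2 (z i)) r1 * esym l (\<lambda>i. wp w1 w2 (z i)) (r2 - 1)
          - esym l (\<lambda>i. wp w1 w2 (z i)) r2 * esym l (\<lambda>i. wp w1 w2 (z i)) (r1 - 1)) * mu (l + 1)"
proof -
  interpret E: ell w1 w2 by unfold_locales (rule tau)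
  define x where "x i = wp w1 w2 (z i)" for i
  have inj: "inj_on x {1..l}"
  proof (rule inj_onI)
    fix i j assume i: "i \<in> {1..l}" and j: "j \<in> {1..l}" and e: "x i = x j"
    show "i = j"
    proof (rule ccontr)
      assume ij: "i \<noteq> j"
      have zi: "z i \<notin> lattice w1 w2" and zj: "z j \<notin> lattice w1 w2" using z_off i j by auto
      have zij: "z i + z j \<notin> lattice w1 w2" using z_pair i j ij by auto
      have d: "(deriv ^^ nn) (wp w1 w2) (z i) = (deriv ^^ nn) (wp w1 w2) (z j)" for nn
        using E.wp_eq_derivs[OF zi zj zij] e unfolding x_def by blast
      have wq: "wpd w1 w2 kk (z i) = wpd w1 w2 kk (z j)" for kk
        unfolding wpd_def using d by simp
      define A where "A = mat l l (\<lambda>(i, j). wpd w1 w2 (k (Suc j)) (z (Suc i)))"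
      have "row A (i - 1) = row A (j - 1)"
        unfolding A_def using i j wq by (auto intro: eq_vecI)
      moreover have "A \<in> carrier_mat l l" unfolding A_def by (rule mat_carrier)
      moreover have "i - 1 \<noteq> j - 1" "i - 1 < l" "j - 1 < l" using i j ij by auto
      ultimately have "det A = 0" using det_identical_rows[of A l "i - 1" "j - 1"] by blast
      then show False using det_nz unfolding A_def by simp
    qed
  qed
  have roots: "\<forall>j\<in>{1..l}. (\<Sum>r=0..l+1. mu r * x j ^ r) = 0"
  proof
    fix j assume j: "j \<in> {1..l}"
    have zj: "z j \<notin> lattice w1 w2" using z_off j by auto
    define Og where "Og = (\<Sum>i\<in>{i\<in>{1..m}. odd (n i)}. gam i * wpd w1 w2 (n i) (z j))"
    define Ol where "Ol = (\<Sum>i\<in>{i\<in>{1..l}. odd (k i)}. lam i * wpd w1 w2 (k i) (z j))"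
    define Eg where "Eg = (\<Sum>i\<in>{i\<in>{1..m}. even (n i)}. gam i * wpd w1 w2 (n i) (z j))"
    define El where "El = (\<Sum>i\<in>{i\<in>{1..l}. even (k i)}. lam i * wpd w1 w2 (k i) (z j))"
    have "(\<Sum>i=1..m. gam i * wpd w1 w2 (n i) (z j)) = Og + Eg"
      unfolding Og_def Eg_def
      using sum_split_pred[of "{1..m}" "\<lambda>i. gam i * wpd w1 w2 (n i) (z j)" "\<lambda>i. even (n i)"]
      by (simp add: add.commute)
    moreover have "(\<Sum>i=1..l. lam i * wpd w1 w2 (k i) (z j)) = Ol + El"
      unfolding Ol_def El_def
      using sum_split_pred[of "{1..l}" "\<lambda>i. lam i * wpd w1 w2 (k i) (z j)" "\<lambda>i. even (k i)"]
      by (simp add: add.commute)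
    ultimately have s: "(Og - Ol) + (Eg - El) = 0" using lam_eq j by (simp add: algebra_simps)
    have "phi w1 w2 m n gam l k lam (z j) = (Og - Ol)^2 - (Eg - El)^2"
      unfolding phi_def Og_def Ol_def Eg_def El_def ..
    also have "\<dots> = ((Og - Ol) - (Eg - El)) * ((Og - Ol) + (Eg - El))"
      by (simp add: power2_eq_square algebra_simps)
    also have "\<dots> = 0" using s by simp
    finally have "phi w1 w2 m n gam l k lam (z j) = 0" .
    then show "(\<Sum>r=0..l+1. mu r * x j ^ r) = 0" using mu_def zj unfolding x_def by simp
  qed
  show ?thesis using alg_main[OF inj roots r1 r2] unfolding x_def .
qed


end
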